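(* Let $G$ be an arithmetic semigroup satisfying $N_G(x)=Ax+\mathcal{O}\!\left(\frac{x}{\log^\gamma x}\right)$ with $\frac32<\gamma\le2$ and $A\in\mathbb{R}$, and let $\zeta=\zeta_G$. Then for real $t\ge2$, $$|\zeta(1+\mathrm{i}t)|\gg t^{-\frac{8}{(\gamma-\frac32)^2}}.$$
   Context: An arithmetic semigroup is a commutative semigroup $(G,\cdot)$ with identity together with a multiplicative norm $\|\cdot\|\colon G\to[1,\infty)$ such that $N_G(x)=|\{g\in G:\|g\|\le x\}|$ is finite for every $x$, the identity is the unique element of norm $1$, and decomposition into irreducible elements is unique. Its zeta function is $\zeta_G(s)=\sum_{g\in G}\|g\|^{-s}$ for $\Re s>1$; for $t\neq0$ the value $\zeta_G(1+\mathrm{i}t)$ denotes the boundary value $\lim_{\sigma\to1^+}\zeta_G(\sigma+\mathrm{i}t)$ (which exists under the hypothesis). *)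

theory Defs
  imports "HOL-Analysis.Analysis" "HOL-Library.Multiset" "HOL-Library.Landau_Symbols"
begin

text \<open>An arithmetic semigroup is modelled as a type of class comm_monoid_mult
  (the whole type is the semigroup G) together with a norm function.\<close>

definition as_irreducible :: "'a::comm_monoid_mult \<Rightarrow> bool" where
  "as_irreducible p \<longleftrightarrow> p \<noteq> 1 \<and> (\<forall>a b. p = a * b \<longrightarrow> a = 1 \<or> b = 1)"

definition arith_semigroup :: "('a::comm_monoid_mult \<Rightarrow> real) \<Rightarrow> bool" where
  "arith_semigroup nrm \<longleftrightarrow>
     (\<forall>g. nrm g \<ge> 1) \<and>
     (\<forall>a b. nrm (a * b) = nrm a * nrm b) \<and>
     (\<forall>g. nrm g = 1 \<longleftrightarrow> g = 1) \<and>
     (\<forall>x. finite {g. nrm g \<le> x}) \<and>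
     (\<forall>g. \<exists>!M::'a multiset. (\<forall>p\<in>#M. as_irreducible p) \<and> prod_mset M = g)"

definition count_N :: "('a \<Rightarrow> real) \<Rightarrow> real \<Rightarrow> real" where
  "count_N nrm x = real (card {g. nrm g \<le> x})"

definition zeta_G :: "('a \<Rightarrow> real) \<Rightarrow> complex \<Rightarrow> complex" where
  "zeta_G nrm s = infsum (\<lambda>g. (complex_of_real (nrm g)) powr (- s)) UNIV"

definition zeta_G_boundary :: "('a \<Rightarrow> real) \<Rightarrow> real \<Rightarrow> complex" where
  "zeta_G_boundary nrm t = Lim (at_right 1) (\<lambda>\<sigma>. zeta_G nrm (Complex \<sigma> t))"

end

theory Submission
  imports Defs
begin


definition ep :: "complex \<Rightarrow> real \<Rightarrow> complex" where
  "ep s x = exp (- s * of_real (ln x))"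

lemma ep_powr: "x > 0 \<Longrightarrow> complex_of_real x powr (-s) = ep s x"
  by (simp add: powr_def ep_def Ln_of_real)

lemma norm_ep: "x > 0 \<Longrightarrow> norm (ep s x) = x powr (- Re s)"
  by (simp add: ep_def powr_def)

lemma ep_mult: "x > 0 \<Longrightarrow> y > 0 \<Longrightarrow> ep s (x * y) = ep s x * ep s y"
  unfolding ep_def by (simp add: ln_mult algebra_simps flip: exp_add)

lemma ep_power: "x > 0 \<Longrightarrow> ep s (x ^ k) = ep s x ^ k"
  by (simp add: ep_def ln_realpow exp_of_nat_mult[symmetric] mult_ac)

lemma ep_1[simp]: "ep s 1 = 1"
  by (simp add: ep_def)

lemma ep_cnj: "ep (cnj s) x = cnj (ep s x)"
  by (simp add: ep_def exp_cnj)

lemma geometric_has_sum: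
  fixes z :: "'b::{real_normed_field, banach}"
  assumes "norm z < 1"
  shows "((\<lambda>n. z ^ n) has_sum (1 / (1 - z))) UNIV"
  by (rule norm_summable_imp_has_sum)
     (use assms in \<open>auto simp: norm_power intro!: summable_geometric geometric_sums\<close>)

locale asg =
  fixes nrm :: "'a::comm_monoid_mult \<Rightarrow> real"
  assumes asg: "arith_semigroup nrm"
begin

lemma nrm_ge1: "nrm g \<ge> 1"
  using asg by (auto simp: arith_semigroup_def)
lemma nrm_pos: "nrm g > 0"
  using nrm_ge1[of g] by linarith
lemma nrm_mult: "nrm (a * b) = nrm a * nrm b"
  using asg by (auto simp: arith_semigroup_def)
lemma nrm_eq1: "nrm g = 1 \<longleftrightarrow> g = 1"
  using asg by (auto simp: arith_semigroup_def)
lemma finite_le: "finite {g. nrm g \<le> x}"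
  using asg by (auto simp: arith_semigroup_def)
lemma ufd: "\<exists>!M::'a multiset. (\<forall>p\<in>#M. as_irreducible p) \<and> prod_mset M = g"
  using asg by (auto simp: arith_semigroup_def)

definition fact :: "'a \<Rightarrow> 'a multiset" where
  "fact g = (THE M. (\<forall>p\<in>#M. as_irreducible p) \<and> prod_mset M = g)"

lemma fact: "(\<forall>p\<in>#fact g. as_irreducible p) \<and> prod_mset (fact g) = g"
  unfolding fact_def by (rule theI'[OF ufd])

lemma fact_unique: "(\<forall>p\<in>#M. as_irreducible p) \<Longrightarrow> fact (prod_mset M) = M"
  unfolding fact_def by (rule the1_equality[OF ufd]) auto

lemma nrm_one: "nrm 1 = 1"
  using nrm_eq1 by simp

lemma irr_gt1: "as_irreducible p \<Longrightarrow> nrm p > 1"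
  using nrm_ge1[of p] nrm_eq1[of p] by (auto simp: as_irreducible_def)

lemma nrm_pow: "nrm (p ^ k) = nrm p ^ k"
  by (induction k) (auto simp: nrm_one nrm_mult)

lemma nrm_prod: "nrm (\<Prod>x\<in>P. f x) = (\<Prod>x\<in>P. nrm (f x))"
  by (induction P rule: infinite_finite_induct) (auto simp: nrm_one nrm_mult)

lemma nrm_factor_le:
  assumes "p \<in># fact g" shows "nrm p \<le> nrm g"
proof -
  have "g = prod_mset (fact g)" using fact by simp
  also have "fact g = add_mset p (fact g - {#p#})" using assms by simp
  finally have "g = p * prod_mset (fact g - {#p#})" by simp
  hence "nrm g = nrm p * nrm (prod_mset (fact g - {#p#}))" by (metis nrm_mult)
  moreover have "nrm (prod_mset (fact g - {#p#})) \<ge> 1" by (rule nrm_ge1)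
  ultimately show ?thesis using nrm_pos[of p] by (simp add: mult_le_cancel_left1)
qed

definition GP :: "'a set \<Rightarrow> 'a set" where "GP P = {g. set_mset (fact g) \<subseteq> P}"
definition emb :: "'a set \<Rightarrow> ('a \<Rightarrow> nat) \<Rightarrow> 'a" where "emb P e = (\<Prod>p\<in>P. p ^ e p)"
definition Me :: "'a set \<Rightarrow> ('a \<Rightarrow> nat) \<Rightarrow> 'a multiset" where
  "Me P e = (\<Sum>p\<in>P. replicate_mset (e p) p)"

lemma prod_mset_rep: "prod_mset (replicate_mset n p) = p ^ n"
  by (induction n) auto

lemma emb_Me: "emb P e = prod_mset (Me P e)"
  unfolding emb_def Me_def
  by (induction P rule: infinite_finite_induct) (auto simp: prod_mset_rep)

lemma count_Me: "finite P \<Longrightarrow> count (Me P e) q = (if q \<in> P then e q else 0)"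
  unfolding Me_def by (simp add: count_sum count_replicate_mset if_distrib sum.delta cong: if_cong)

lemma set_Me: "finite P \<Longrightarrow> set_mset (Me P e) \<subseteq> P"
  by (auto simp: count_Me simp flip: count_greater_zero_iff split: if_splits)

lemma fact_emb:
  assumes "finite P" "\<forall>p\<in>P. as_irreducible p"
  shows "fact (emb P e) = Me P e"
  unfolding emb_Me using set_Me[OF assms(1)] assms(2) by (intro fact_unique) auto

lemma inj_emb:
  assumes "finite P" "\<forall>p\<in>P. as_irreducible p"
  shows "inj_on (emb P) (PiE P (\<lambda>_. UNIV))"
proof
  fix e e' assume e: "e \<in> PiE P (\<lambda>_. UNIV)" and e': "e' \<in> PiE P (\<lambda>_. UNIV)"
    and eq: "emb P e = emb P e'"
  hence "Me P e = Me P e'" using fact_emb[OF assms] by metis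
  hence "count (Me P e) q = count (Me P e') q" for q by simp
  hence "\<forall>q\<in>P. e q = e' q" using count_Me[OF assms(1)] by metis
  thus "e = e'" using e e' by (metis PiE_ext)
qed

lemma image_emb:
  assumes "finite P" "\<forall>p\<in>P. as_irreducible p"
  shows "emb P ` PiE P (\<lambda>_. UNIV) = GP P"
proof safe
  fix e :: "'a \<Rightarrow> nat" assume "e \<in> PiE P (\<lambda>_. UNIV)"
  show "emb P e \<in> GP P" unfolding GP_def using fact_emb[OF assms] set_Me[OF assms(1)] by auto
next
  fix g assume g: "g \<in> GP P"
  define e where "e = (\<lambda>p\<in>P. count (fact g) p)"
  have "Me P e = fact g"
  proof (rule multiset_eqI)
    fix q show "count (Me P e) q = count (fact g) q"
      using g by (auto simp: count_Me[OF assms(1)] e_def GP_def simp flip: count_greater_zero_iff)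
  qed
  hence "emb P e = g" using fact[of g] by (simp add: emb_Me)
  moreover have "e \<in> PiE P (\<lambda>_. UNIV)" by (simp add: e_def)
  ultimately show "g \<in> emb P ` PiE P (\<lambda>_. UNIV)" by blast
qed

lemma ep_emb: "ep s (nrm (emb P e)) = (\<Prod>p\<in>P. ep s (nrm p) ^ e p)"
proof -
  have "ep s (nrm (emb P e)) = ep s (\<Prod>p\<in>P. nrm p ^ e p)"
    by (simp add: emb_def nrm_prod nrm_pow)
  also have "\<dots> = (\<Prod>p\<in>P. ep s (nrm p) ^ e p)"
  proof (induction P rule: infinite_finite_induct)
    case (insert x F)
    thus ?case using nrm_pos by (simp add: ep_mult ep_power prod_pos)
  qed auto
  finally show ?thesis .
qed

lemma ZP_euler:
  assumes "finite P" "\<forall>p\<in>P. as_irreducible p" "Re s > 0"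
  shows "infsum (\<lambda>g. ep s (nrm g)) (GP P) = (\<Prod>p\<in>P. 1 / (1 - ep s (nrm p)))"
proof -
  have lt1: "norm (ep s (nrm p)) < 1" if "p \<in> P" for p
  proof -
    have "nrm p > 1" using irr_gt1 assms(2) that by auto
    thus ?thesis using assms(3) by (simp add: norm_ep powr_less_one)
  qed
  have "infsum (\<lambda>g. ep s (nrm g)) (GP P) = infsum ((\<lambda>g. ep s (nrm g)) \<circ> emb P) (PiE P (\<lambda>_. UNIV))"
    using infsum_reindex[OF inj_emb[OF assms(1,2)]] image_emb[OF assms(1,2)] by metis
  also have "\<dots> = infsum (\<lambda>e. \<Prod>p\<in>P. (\<lambda>p k. ep s (nrm p) ^ k) p (e p)) (PiE P (\<lambda>_. UNIV))"
    by (simp add: o_def ep_emb)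
  also have "\<dots> = (\<Prod>p\<in>P. infsum (\<lambda>k. ep s (nrm p) ^ k) UNIV)"
  proof (rule infsum_prod_PiE_abs[OF assms(1)])
    fix p assume "p \<in> P"
    hence "norm (norm (ep s (nrm p))) < 1" using lt1 by simp
    from geometric_has_sum[OF this] have "(\<lambda>k. (norm (ep s (nrm p)) ^ k)) summable_on UNIV"
      by (simp add: summable_on_def) (metis)
    thus "(\<lambda>k. norm (ep s (nrm p) ^ k)) summable_on UNIV"
      by (simp add: norm_power)
  qed
  also have "\<dots> = (\<Prod>p\<in>P. 1 / (1 - ep s (nrm p)))"
    using lt1 by (intro prod.cong refl infsumI geometric_has_sum) auto
  finally show ?thesis .
qed

end


lemma trig_ineq:
  fixes r :: real and u :: "nat \<Rightarrow> complex"
  assumes r: "0 \<le> r" "r < 1" and u: "\<And>l. norm (u l) = 1"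
  shows "(\<Prod>l<n. \<Prod>l'<n. norm (1 - of_real r * u l * cnj (u l'))) \<le> 1"
proof -
  define w where "w l l' = of_real r * u l * cnj (u l')" for l l'
  have nw: "norm (w l l') = r" for l l' using r u by (simp add: w_def norm_mult)
  have ne: "1 - w l l' \<noteq> 0" for l l' using nw[of l l'] r by auto
  have S1: "(\<lambda>j. - ((w l l') ^ j) / of_nat j) sums Ln (1 - w l l')" for l l'
    using Ln_series'[of "- w l l'"] nw[of l l'] r by simp
  have S2: "(\<lambda>j. \<Sum>l<n. \<Sum>l'<n. - ((w l l') ^ j) / of_nat j) sums (\<Sum>l<n. \<Sum>l'<n. Ln (1 - w l l'))"
    by (intro sums_sum S1)
  have trm: "(\<Sum>l<n. \<Sum>l'<n. - ((w l l') ^ j) / of_nat j)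
      = of_real (- (r ^ j / real j) * (norm (\<Sum>l<n. u l ^ j))^2)" for j
  proof -
    have "(\<Sum>l<n. \<Sum>l'<n. - ((w l l') ^ j) / of_nat j)
        = - (of_real (r ^ j) / of_nat j) * ((\<Sum>l<n. u l ^ j) * cnj (\<Sum>l'<n. u l' ^ j))"
      by (simp add: w_def power_mult_distrib sum_distrib_left sum_distrib_right cnj_sum
          sum_negf sum_divide_distrib mult_ac) (rule sum.swap)
    also have "(\<Sum>l<n. u l ^ j) * cnj (\<Sum>l'<n. u l' ^ j) = of_real ((norm (\<Sum>l<n. u l ^ j))^2)"
      by (simp only: complex_norm_square cnj_sum complex_cnj_power)
    finally show ?thesis by simp
  qed
  have S3: "(\<lambda>j. - (r ^ j / real j) * (norm (\<Sum>l<n. u l ^ j))^2) sums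
      (\<Sum>l<n. \<Sum>l'<n. ln (norm (1 - w l l')))"
  proof -
    have "(\<lambda>j. complex_of_real (- (r ^ j / real j) * (norm (\<Sum>l<n. u l ^ j))^2)) sums
      (\<Sum>l<n. \<Sum>l'<n. Ln (1 - w l l'))" using S2 by (simp only: trm)
    from sums_Re[OF this] show ?thesis using ne by (simp add: Re_sum)
  qed
  have le0: "(\<Sum>l<n. \<Sum>l'<n. ln (norm (1 - w l l'))) \<le> 0"
    using S3 sums_le[OF _ sums_zero S3] r by (auto intro!: sums_le[OF _ S3 sums_zero] mult_nonneg_nonneg)
  have pos: "(\<Prod>l<n. \<Prod>l'<n. norm (1 - w l l')) > 0" using ne by (auto intro!: prod_pos)
  have "ln (\<Prod>l<n. \<Prod>l'<n. norm (1 - w l l')) = (\<Sum>l<n. \<Sum>l'<n. ln (norm (1 - w l l')))"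
    using ne by (simp add: ln_prod prod_pos)
  hence "ln (\<Prod>l<n. \<Prod>l'<n. norm (1 - w l l')) \<le> 0" using le0 by simp
  hence "(\<Prod>l<n. \<Prod>l'<n. norm (1 - w l l')) \<le> 1" using pos by simp
  thus ?thesis by (simp add: w_def)
qed


lemma ep_succ: "x > 0 \<Longrightarrow> ep (s + 1) x = ep s x / of_real x"
proof -
  assume x: "x > 0"
  have "ep (s + 1) x = ep s x * exp (- of_real (ln x))"
    by (simp add: ep_def algebra_simps flip: exp_add)
  also have "exp (- complex_of_real (ln x)) = of_real (exp (- ln x))"
    by (simp flip: exp_of_real)
  also have "exp (- ln x) = 1 / x" using x by (simp add: exp_minus inverse_eq_divide)
  finally show ?thesis by (simp add: divide_inverse)
qed

lemma ep_deriv: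
  assumes "x > 0"
  shows "(ep s has_vector_derivative (- s * ep (s + 1) x)) (at x within S)"
proof -
  have d1: "((\<lambda>x. - s * of_real (ln x)) has_vector_derivative (- s * of_real (inverse x))) (at x within S)"
  proof -
    have "(ln has_real_derivative inverse x) (at x within S)"
      by (rule has_field_derivative_at_within[OF DERIV_ln[OF assms]])
    hence "((\<lambda>x. of_real (ln x)) has_vector_derivative of_real (inverse x)) (at x within S)"
      by (rule has_vector_derivative_of_real)
    thus ?thesis by (rule has_vector_derivative_mult_right)
  qed
  have "((exp \<circ> (\<lambda>x. - s * of_real (ln x))) has_vector_derivative
         ((- s * of_real (inverse x)) * exp (- s * of_real (ln x)))) (at x within S)"
    by (rule field_vector_diff_chain_within[OF d1 has_field_derivative_at_within[OF DERIV_exp]])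
  moreover have "exp \<circ> (\<lambda>x. - s * of_real (ln x)) = ep s" by (auto simp: ep_def)
  moreover have "exp (- s * of_real (ln x)) = ep s x" by (simp add: ep_def)
  moreover have "(- s * of_real (inverse x)) * ep s x = - s * ep (s + 1) x"
    using assms by (simp add: ep_succ divide_inverse mult_ac)
  ultimately show ?thesis by (simp only:)
qed

lemma ep_integral:
  assumes "c \<noteq> 0" "0 < a" "a \<le> b"
  shows "(ep (c + 1) has_integral (ep c a - ep c b) / c) {a..b}"
proof -
  have "((\<lambda>x. - ep c x / c) has_vector_derivative ep (c + 1) x) (at x within {a..b})"
    if "x \<in> {a..b}" for x
  proof -
    have "x > 0" using that assms by auto
    from has_vector_derivative_mult_right[OF ep_deriv[OF this], of "- 1 / c" c "{a..b}"]
    show ?thesis using assms(1) by simp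
  qed
  from fundamental_theorem_of_calculus[OF assms(3) this]
  show ?thesis by (simp add: diff_divide_distrib add.commute)
qed

lemma norm_ep_le:
  assumes "x \<ge> 1" "Re s \<ge> a"
  shows "norm (ep s x) \<le> x powr (- a)"
  using assms by (simp add: norm_ep powr_mono)

context asg
begin

definition N :: "real \<Rightarrow> real" where "N x = count_N nrm x"
definition FX :: "real \<Rightarrow> 'a set" where "FX X = {g. nrm g \<le> X}"
definition ZX :: "real \<Rightarrow> complex \<Rightarrow> complex" where "ZX X s = (\<Sum>g\<in>FX X. ep s (nrm g))"
definition Z :: "complex \<Rightarrow> complex" where "Z s = infsum (\<lambda>g. ep s (nrm g)) UNIV"

lemma zeta_Z: "zeta_G nrm s = Z s"
  unfolding zeta_G_def Z_def using nrm_pos by (simp add: ep_powr)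

lemma finite_FX[simp]: "finite (FX X)"
  by (simp add: FX_def finite_le)

lemma N_card: "N X = real (card (FX X))"
  by (simp add: N_def count_N_def FX_def)

lemma N_mono: "x \<le> y \<Longrightarrow> N x \<le> N y"
  unfolding N_card by (intro of_nat_mono card_mono) (auto simp: FX_def finite_le)

lemma N_nonneg: "N x \<ge> 0"
  by (simp add: N_card)

lemma N_identity:
  assumes "X \<ge> 1" "s \<noteq> 0"
  shows "((\<lambda>x. of_real (N x) * ep (s + 1) x) has_integral (ZX X s - of_real (N X) * ep s X) / s) {1..X}"
proof -
  have "((\<lambda>x. if x \<in> {nrm g..X} then ep (s + 1) x else 0) has_integral (ep s (nrm g) - ep s X) / s) {1..X}"
    if "g \<in> FX X" for g
  proof -
    have "(ep (s + 1) has_integral (ep s (nrm g) - ep s X) / s) {nrm g..X}"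
      using that assms nrm_pos[of g] by (intro ep_integral) (auto simp: FX_def)
    moreover have "{nrm g..X} \<subseteq> {1..X}" using nrm_ge1[of g] by auto
    ultimately show ?thesis by (subst has_integral_restrict) auto
  qed
  from has_integral_sum[OF finite_FX this]
  have I: "((\<lambda>x. \<Sum>g\<in>FX X. if x \<in> {nrm g..X} then ep (s + 1) x else 0) has_integral
          (\<Sum>g\<in>FX X. (ep s (nrm g) - ep s X) / s)) {1..X}" .
  have eq: "(\<Sum>g\<in>FX X. if x \<in> {nrm g..X} then ep (s + 1) x else 0) = of_real (N x) * ep (s + 1) x"
    if "x \<in> {1..X}" for x
  proof -
    have "(\<Sum>g\<in>FX X. if x \<in> {nrm g..X} then ep (s + 1) x else 0)
        = (\<Sum>g\<in>{g\<in>FX X. nrm g \<le> x}. ep (s + 1) x)"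
      using that by (subst sum.inter_filter[symmetric]) (auto intro!: sum.cong)
    also have "{g\<in>FX X. nrm g \<le> x} = FX x" using that by (auto simp: FX_def)
    finally show ?thesis by (simp add: N_card)
  qed
  have rhs: "(\<Sum>g\<in>FX X. (ep s (nrm g) - ep s X) / s) = (ZX X s - of_real (N X) * ep s X) / s"
    by (simp add: ZX_def N_card sum_divide_distrib[symmetric] sum_subtractf)
  from has_integral_eq[OF eq I] show ?thesis by (simp only: rhs)
qed

lemma main_identity:
  assumes "X \<ge> 1" "s \<noteq> 1"
  shows "((\<lambda>x. of_real (A * x) * ep (s + 1) x) has_integral of_real A * ((1 - ep (s - 1) X) / (s - 1))) {1..X}"
proof -
  have "(ep ((s - 1) + 1) has_integral (ep (s - 1) 1 - ep (s - 1) X) / (s - 1)) {1..X}"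
    using assms by (intro ep_integral) auto
  hence "((\<lambda>x. of_real A * ep s x) has_integral of_real A * ((1 - ep (s - 1) X) / (s - 1))) {1..X}"
    by (intro has_integral_mult_right) simp
  thus ?thesis
    by (rule has_integral_eq[rotated]) (auto simp: ep_succ)
qed

end

locale asgA = asg nrm for nrm :: "'a::comm_monoid_mult \<Rightarrow> real" +
  fixes A :: real
begin

definition Rf :: "real \<Rightarrow> real" where "Rf x = N x - A * x"
definition J :: "real \<Rightarrow> complex \<Rightarrow> complex" where
  "J X s = integral {1..X} (\<lambda>x. of_real (Rf x) * ep (s + 1) x)"

lemma R_identity:
  assumes "X \<ge> 1" "s \<noteq> 0" "s \<noteq> 1"
  shows "((\<lambda>x. of_real (Rf x) * ep (s + 1) x) has_integral
          (ZX X s - of_real (N X) * ep s X) / s - of_real A * ((1 - ep (s - 1) X) / (s - 1))) {1..X}"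
  using has_integral_diff[OF N_identity[OF assms(1,2)] main_identity[where A=A, OF assms(1,3)]]
  by (simp add: Rf_def algebra_simps)

lemma R_integrable: "X \<ge> 1 \<Longrightarrow> Re s > 1 \<Longrightarrow> (\<lambda>x. of_real (Rf x) * ep (s + 1) x) integrable_on {1..X}"
proof -
  assume a: "X \<ge> 1" "Re s > 1"
  hence "s \<noteq> 0" "s \<noteq> 1" by auto
  with a show ?thesis by (intro has_integral_integrable[OF R_identity])
qed

lemma ZX_formula:
  assumes "X \<ge> 1" "Re s > 1"
  shows "ZX X s = of_real (N X) * ep s X + of_real A * s * ((1 - ep (s - 1) X) / (s - 1)) + s * J X s"
proof -
  have s: "s \<noteq> 0" "s \<noteq> 1" using assms by auto
  have "J X s = (ZX X s - of_real (N X) * ep s X) / s - of_real A * ((1 - ep (s - 1) X) / (s - 1))"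
    unfolding J_def using R_identity[OF assms(1) s] by (rule integral_unique)
  hence "s * J X s = s * ((ZX X s - of_real (N X) * ep s X) / s) - s * (of_real A * ((1 - ep (s - 1) X) / (s - 1)))"
    by (simp add: right_diff_distrib)
  also have "s * ((ZX X s - of_real (N X) * ep s X) / s) = ZX X s - of_real (N X) * ep s X"
    using s by simp
  finally show ?thesis by (simp add: algebra_simps)
qed

end

locale asgB = asgA nrm A for nrm :: "'a::comm_monoid_mult \<Rightarrow> real" and A +
  fixes K x0 \<gamma> \<theta> :: real
  assumes x0: "x0 \<ge> exp 1" and K: "K \<ge> 0" and th: "0 < \<theta>" "\<theta> \<le> 1" and q: "\<gamma> - \<theta> > 1"
  and Rbound: "\<And>x. x \<ge> x0 \<Longrightarrow> \<bar>Rf x\<bar> \<le> K * x / ln x powr \<gamma>"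
begin

definition B1 where "B1 = (N x0 + \<bar>A\<bar> * x0) * (1 + ln x0 powr \<theta>)"
definition D where "D = B1 * (x0 - 1) + 2 * K / (\<gamma> - \<theta> - 1)"

lemma x0_ge1: "x0 \<ge> 1"
proof -
  have "exp 1 \<ge> (1::real)" by simp
  thus ?thesis using x0 by linarith
qed

lemma ln_ge1: "x \<ge> x0 \<Longrightarrow> ln x \<ge> 1"
proof -
  assume "x \<ge> x0"
  moreover have "x0 > 0" using x0_ge1 by simp
  ultimately show ?thesis using x0 by (subst ln_ge_iff) auto
qed

lemma small_bound:
  assumes "1 \<le> x" "x \<le> x0"
  shows "\<bar>Rf x\<bar> / x^2 * (1 + ln x powr \<theta>) \<le> B1"
proof -
  have "\<bar>Rf x\<bar> \<le> \<bar>N x\<bar> + \<bar>A * x\<bar>" unfolding Rf_def by (rule abs_triangle_ineq4)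
  also have "\<dots> = N x + \<bar>A\<bar> * x" using N_nonneg[of x] assms by (simp add: abs_mult)
  also have "\<dots> \<le> N x0 + \<bar>A\<bar> * x0"
    using N_mono[OF assms(2)] assms by (intro add_mono mult_left_mono) auto
  finally have r: "\<bar>Rf x\<bar> \<le> N x0 + \<bar>A\<bar> * x0" .
  have "\<bar>Rf x\<bar> / x^2 \<le> \<bar>Rf x\<bar> / 1"
    using assms by (intro divide_left_mono) (auto simp: one_le_power)
  hence r2: "\<bar>Rf x\<bar> / x^2 \<le> N x0 + \<bar>A\<bar> * x0" using r by simp
  have "ln x powr \<theta> \<le> ln x0 powr \<theta>"
    using assms th by (intro powr_mono2) auto
  thus ?thesis unfolding B1_def using r2 N_nonneg[of x0] x0_ge1
    by (intro mult_mono) auto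
qed

lemma large_bound:
  assumes "x \<ge> x0"
  shows "\<bar>Rf x\<bar> / x^2 * (1 + ln x powr \<theta>) \<le> 2 * K * (ln x powr (- (\<gamma> - \<theta>)) / x)"
proof -
  have l: "ln x \<ge> 1" using ln_ge1[OF assms] .
  have xp: "x > 0" using assms x0_ge1 by auto
  have "1 + ln x powr \<theta> \<le> 2 * ln x powr \<theta>" using l th by (simp add: ge_one_powr_ge_zero)
  moreover have "\<bar>Rf x\<bar> / x^2 \<le> K / ln x powr \<gamma> / x"
    using Rbound[OF assms] xp by (simp add: power2_eq_square divide_le_eq field_simps)
  ultimately have "\<bar>Rf x\<bar> / x^2 * (1 + ln x powr \<theta>) \<le> K / ln x powr \<gamma> / x * (2 * ln x powr \<theta>)"
    using K xp by (intro mult_mono) auto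
  also have "\<dots> = 2 * K * (ln x powr (- (\<gamma> - \<theta>)) / x)"
    using l by (simp add: powr_minus powr_diff field_simps powr_add[symmetric])
  finally show ?thesis .
qed

lemma maj_integral:
  assumes "X \<ge> x0"
  shows "((\<lambda>x. ln x powr (- (\<gamma> - \<theta>)) / x) has_integral
     (ln x0 powr (1 - (\<gamma> - \<theta>)) - ln X powr (1 - (\<gamma> - \<theta>))) / (\<gamma> - \<theta> - 1)) {x0..X}"
proof -
  define a where "a = \<gamma> - \<theta>"
  have a: "a > 1" using q by (simp add: a_def)
  have "((\<lambda>x. - (ln x powr (1 - a)) / (a - 1)) has_vector_derivative (ln x powr (- a) / x)) (at x within {x0..X})"
    if "x \<in> {x0..X}" for x
  proof -
    have l: "ln x \<ge> 1" using ln_ge1 that by auto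
    have xp: "x > 0" using that x0_ge1 by auto
    have "((\<lambda>x. - (ln x powr (1 - a)) / (a - 1)) has_real_derivative
          (- ((1 - a) * ln x powr (1 - a - 1) * (1 / x)) / (a - 1))) (at x)"
    proof -
      have x1: "x > 1" using l xp by (metis ln_gt_zero_iff not_one_le_zero order_le_less_trans zero_less_one linorder_not_less order.trans ln_less_zero_iff le_less) 
      show ?thesis using l xp x1 a by (auto intro!: derivative_eq_intros)
    qed
    moreover have "- ((1 - a) * ln x powr (1 - a - 1) * (1 / x)) / (a - 1) = ln x powr (- a) / x"
    proof -
      have e: "1 - a - 1 = - a" by simp
      have "a - 1 \<noteq> 0" "x \<noteq> 0" using a xp by auto
      thus ?thesis unfolding e by (simp add: field_simps)
    qed
    ultimately show ?thesis
      by (simp add: has_real_derivative_iff_has_vector_derivative[symmetric] has_field_derivative_at_within)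
  qed
  note D = this
  have e: "(ln x0 powr (1 - a) - ln X powr (1 - a)) / (a - 1) = - (ln X powr (1 - a)) / (a - 1) - - (ln x0 powr (1 - a)) / (a - 1)"
    by (simp add: diff_divide_distrib)
  show ?thesis unfolding a_def[symmetric] e
    by (rule fundamental_theorem_of_calculus[OF assms D])
qed

lemma int_bound:
  fixes f :: "real \<Rightarrow> complex"
  assumes X: "X \<ge> x0" and c: "c \<ge> 0" and f: "f integrable_on {1..X}"
    and fb: "\<And>x. x \<in> {1..X} \<Longrightarrow> norm (f x) \<le> c * (\<bar>Rf x\<bar> / x^2 * (1 + ln x powr \<theta>))"
  shows "norm (integral {1..X} f) \<le> c * D"
proof -
  have split: "integral {1..x0} f + integral {x0..X} f = integral {1..X} f"
    using X x0_ge1 f by (intro Henstock_Kurzweil_Integration.integral_combine) auto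
  have f1: "f integrable_on {1..x0}" using X by (intro integrable_subinterval_real[OF f]) auto
  have f2: "f integrable_on {x0..X}" using X x0_ge1 by (intro integrable_subinterval_real[OF f]) auto
  have "norm (integral {1..x0} f) \<le> integral {1..x0} (\<lambda>x. c * B1)"
    using f1 X by (intro integral_norm_bound_integral)
      (auto intro!: order.trans[OF fb] mult_left_mono small_bound c)
  also have "\<dots> = c * B1 * (x0 - 1)" using x0_ge1 by simp
  finally have I1: "norm (integral {1..x0} f) \<le> c * B1 * (x0 - 1)" .
  have mi: "((\<lambda>x. c * (2 * K) * (ln x powr (- (\<gamma> - \<theta>)) / x)) has_integral
     c * (2 * K) * ((ln x0 powr (1 - (\<gamma> - \<theta>)) - ln X powr (1 - (\<gamma> - \<theta>))) / (\<gamma> - \<theta> - 1))) {x0..X}"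
    by (intro has_integral_mult_right maj_integral X)
  have "norm (integral {x0..X} f) \<le> integral {x0..X} (\<lambda>x. c * (2 * K) * (ln x powr (- (\<gamma> - \<theta>)) / x))"
  proof (rule integral_norm_bound_integral[OF f2])
    show "(\<lambda>x. c * (2 * K) * (ln x powr (- (\<gamma> - \<theta>)) / x)) integrable_on {x0..X}"
      using mi by (rule has_integral_integrable)
    fix x assume x: "x \<in> {x0..X}"
    hence "x \<in> {1..X}" using x0_ge1 by auto
    from fb[OF this] have "norm (f x) \<le> c * (\<bar>Rf x\<bar> / x^2 * (1 + ln x powr \<theta>))" .
    also have "\<dots> \<le> c * (2 * K * (ln x powr (- (\<gamma> - \<theta>)) / x))"
      using large_bound x c by (intro mult_left_mono) auto
    finally show "norm (f x) \<le> c * (2 * K) * (ln x powr (- (\<gamma> - \<theta>)) / x)" by (simp add: mult.assoc)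
  qed
  also have "\<dots> = c * (2 * K) * ((ln x0 powr (1 - (\<gamma> - \<theta>)) - ln X powr (1 - (\<gamma> - \<theta>))) / (\<gamma> - \<theta> - 1))"
    using mi by (rule integral_unique)
  also have "\<dots> \<le> c * (2 * K) * (1 / (\<gamma> - \<theta> - 1))"
  proof -
    have "ln x0 powr (1 - (\<gamma> - \<theta>)) \<le> ln x0 powr 0" using ln_ge1[of x0] q by (intro powr_mono) auto
    moreover have "ln x0 powr 0 = 1" using ln_ge1[of x0] by simp
    moreover have "0 \<le> ln X powr (1 - (\<gamma> - \<theta>))" by simp
    ultimately have "ln x0 powr (1 - (\<gamma> - \<theta>)) - ln X powr (1 - (\<gamma> - \<theta>)) \<le> 1" by linarith
    hence "(ln x0 powr (1 - (\<gamma> - \<theta>)) - ln X powr (1 - (\<gamma> - \<theta>))) / (\<gamma> - \<theta> - 1) \<le> 1 / (\<gamma> - \<theta> - 1)"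
      using q by (intro divide_right_mono) auto
    thus ?thesis using c K by (intro mult_left_mono) auto
  qed
  finally have I2: "norm (integral {x0..X} f) \<le> c * (2 * K) * (1 / (\<gamma> - \<theta> - 1))" .
  have "norm (integral {1..X} f) \<le> norm (integral {1..x0} f) + norm (integral {x0..X} f)"
    by (metis split norm_triangle_ineq)
  also have "\<dots> \<le> c * D" using I1 I2 by (simp add: D_def algebra_simps)
  finally show ?thesis .
qed

end


lemma one_minus_exp_le:
  fixes y \<theta> :: real
  assumes "y \<ge> 0" "0 < \<theta>" "\<theta> \<le> 1"
  shows "1 - exp (- y) \<le> y powr \<theta>"
proof (cases "y \<le> 1")
  case True
  have "1 - exp (- y) \<le> y" using exp_ge_add_one_self[of "- y"] by linarith
  also have "y \<le> y powr \<theta>"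
  proof -
    have "y powr 1 \<le> y powr \<theta>" using True assms by (intro powr_mono') auto
    thus ?thesis using assms by (cases "y = 0") auto
  qed
  finally show ?thesis .
next
  case False
  have "1 - exp (- y) \<le> 1" by simp
  also have "1 \<le> y powr \<theta>" using False assms by (intro ge_one_powr_ge_zero) auto
  finally show ?thesis .
qed

lemma norm_1_minus_of_real: "norm (1 - complex_of_real r) = \<bar>1 - r\<bar>"
  by (metis norm_of_real of_real_1 of_real_diff)

lemma powr_le1': "1 \<le> (X::real) \<Longrightarrow> a \<le> 0 \<Longrightarrow> X powr a \<le> 1"
  using powr_mono[of a 0 X] by simp

lemma ep_add: "ep (a + b) x = ep a x * ep b x"
  by (simp add: ep_def algebra_simps flip: exp_add)

lemma ep_real: "x > 0 \<Longrightarrow> ep (of_real d) x = of_real (exp (- d * ln x))"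
  by (simp add: ep_def flip: exp_of_real)

context asg
begin

lemma filterlim_FX: "filterlim FX (finite_subsets_at_top UNIV) at_top"
  unfolding filterlim_finite_subsets_at_top
proof safe
  fix X0 :: "'a set" assume "finite X0"
  define y0 where "y0 = Max (insert 0 (nrm ` X0))"
  have "nrm g \<le> y0" if "g \<in> X0" for g
    unfolding y0_def using \<open>finite X0\<close> that by (intro Max_ge) auto
  hence "X0 \<subseteq> FX y" if "y \<ge> y0" for y using that by (force simp: FX_def)
  thus "\<forall>\<^sub>F y in at_top. finite (FX y) \<and> X0 \<subseteq> FX y \<and> FX y \<subseteq> UNIV"
    using eventually_mono[OF eventually_ge_at_top[of y0]] by auto
qed

lemma tendsto_FX:
  assumes "f summable_on UNIV"
  shows "((\<lambda>X. sum f (FX X)) \<longlongrightarrow> infsum f UNIV) at_top"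
proof -
  have "(sum f \<longlongrightarrow> infsum f UNIV) (finite_subsets_at_top UNIV)"
    using has_sum_infsum[OF assms] by (simp add: has_sum_def)
  from filterlim_compose[OF this filterlim_FX] show ?thesis by (simp add: o_def)
qed

end

context asgB
begin

lemma gamma_pos: "\<gamma> > 0" using q th by linarith

lemma N_bound:
  assumes "X \<ge> x0" shows "N X \<le> (\<bar>A\<bar> + K) * X"
proof -
  have X1: "X \<ge> 1" using assms x0_ge1 by linarith
  have "ln X powr \<gamma> \<ge> 1" using ln_ge1[OF assms] gamma_pos by (intro ge_one_powr_ge_zero) auto
  hence "K * X / ln X powr \<gamma> \<le> K * X" using K X1 by (simp add: divide_le_eq mult_le_cancel_left1 mult_nonneg_nonneg) (smt (verit, best) mult_le_cancel_left1 mult_nonneg_nonneg)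
  hence "\<bar>Rf X\<bar> \<le> K * X" using Rbound[OF assms] by linarith
  moreover have "N X = A * X + Rf X" by (simp add: Rf_def)
  moreover have "A * X \<le> \<bar>A\<bar> * X" using X1 by (intro mult_right_mono) auto
  ultimately show ?thesis by (simp add: algebra_simps)
qed

lemma J_bound:
  assumes "X \<ge> x0" "Re s > 1"
  shows "norm (J X s) \<le> D"
proof -
  have X1: "X \<ge> 1" using assms x0_ge1 by linarith
  have "norm (J X s) \<le> 1 * D"
    unfolding J_def
  proof (rule int_bound[OF assms(1)])
    show "(\<lambda>x. complex_of_real (Rf x) * ep (s + 1) x) integrable_on {1..X}"
      using R_integrable[OF X1 assms(2)] .
    fix x assume x: "x \<in> {1..X}"
    hence xp: "x > 0" by auto
    have "norm (complex_of_real (Rf x) * ep (s + 1) x) = \<bar>Rf x\<bar> * x powr (- Re (s + 1))"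
      using xp by (simp add: norm_mult norm_ep)
    also have "\<dots> \<le> \<bar>Rf x\<bar> * x powr (- 2)"
      using x assms by (intro mult_left_mono powr_mono) auto
    also have "\<dots> = \<bar>Rf x\<bar> / x^2" using xp by (simp add: powr_minus powr_realpow divide_inverse)
    also have "\<dots> \<le> 1 * (\<bar>Rf x\<bar> / x^2 * (1 + ln x powr \<theta>))"
      using mult_left_mono[of 1 "1 + ln x powr \<theta>" "\<bar>Rf x\<bar> / x^2"] by simp
    finally show "norm (complex_of_real (Rf x) * ep (s + 1) x) \<le> 1 * (\<bar>Rf x\<bar> / x^2 * (1 + ln x powr \<theta>))" .
  qed auto
  thus ?thesis by simp
qed

lemma J_diff_bound:
  assumes "X \<ge> x0" "Re s > 1" "0 \<le> d" "d \<le> 1"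
  shows "norm (J X s - J X (s + of_real d)) \<le> d powr \<theta> * D"
proof -
  have X1: "X \<ge> 1" using assms x0_ge1 by linarith
  have s2: "Re (s + of_real d) > 1" using assms by simp
  have eq: "J X s - J X (s + of_real d) = integral {1..X}
      (\<lambda>x. complex_of_real (Rf x) * ep (s + 1) x - complex_of_real (Rf x) * ep (s + of_real d + 1) x)"
    unfolding J_def by (rule integral_diff[symmetric]) (use R_integrable X1 assms s2 in auto)
  have "norm (J X s - J X (s + of_real d)) \<le> d powr \<theta> * D"
    unfolding eq
  proof (rule int_bound[OF assms(1)])
    show "(\<lambda>x. complex_of_real (Rf x) * ep (s + 1) x - complex_of_real (Rf x) * ep (s + of_real d + 1) x) integrable_on {1..X}"
      using R_integrable[OF X1 assms(2)] R_integrable[OF X1 s2] by (rule integrable_diff)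
    show "d powr \<theta> \<ge> 0" by simp
    fix x assume x: "x \<in> {1..X}"
    hence xp: "x > 0" and lx: "ln x \<ge> 0" by auto
    have "complex_of_real (Rf x) * ep (s + 1) x - complex_of_real (Rf x) * ep (s + of_real d + 1) x
        = complex_of_real (Rf x) * ep (s + 1) x * (1 - ep (of_real d) x)"
    proof -
      have "ep (s + of_real d + 1) x = ep (s + 1) x * ep (of_real d) x"
        by (simp add: ep_add[symmetric] algebra_simps)
      thus ?thesis by (simp add: algebra_simps)
    qed
    also have "1 - ep (of_real d) x = of_real (1 - exp (- (d * ln x)))"
      using xp by (simp add: ep_real)
    finally have "norm (complex_of_real (Rf x) * ep (s + 1) x - complex_of_real (Rf x) * ep (s + of_real d + 1) x)
        = \<bar>Rf x\<bar> * x powr (- Re (s + 1)) * \<bar>1 - exp (- (d * ln x))\<bar>"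
      using xp by (simp add: norm_mult norm_ep norm_1_minus_of_real)
    also have "\<bar>1 - exp (- (d * ln x))\<bar> = 1 - exp (- (d * ln x))"
      using assms lx by (simp add: mult_nonneg_nonneg)
    also have "\<dots> \<le> (d * ln x) powr \<theta>"
      using assms lx th by (intro one_minus_exp_le) auto
    also have "\<dots> = d powr \<theta> * ln x powr \<theta>" using assms lx by (simp add: powr_mult)
    also have "x powr (- Re (s + 1)) \<le> x powr (- 2)"
      using x assms by (intro powr_mono) auto
    hence "\<bar>Rf x\<bar> * x powr (- Re (s + 1)) * (d powr \<theta> * ln x powr \<theta>) \<le> \<bar>Rf x\<bar> * x powr (- 2) * (d powr \<theta> * ln x powr \<theta>)"
      by (intro mult_right_mono mult_left_mono) auto
    also have "\<dots> = d powr \<theta> * (\<bar>Rf x\<bar> / x^2 * ln x powr \<theta>)"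
      using xp by (simp add: powr_minus powr_realpow divide_inverse)
    also have "\<dots> \<le> d powr \<theta> * (\<bar>Rf x\<bar> / x^2 * (1 + ln x powr \<theta>))"
      by (intro mult_left_mono) (auto simp: algebra_simps)
    finally show "norm (complex_of_real (Rf x) * ep (s + 1) x - complex_of_real (Rf x) * ep (s + of_real d + 1) x)
        \<le> d powr \<theta> * (\<bar>Rf x\<bar> / x^2 * (1 + ln x powr \<theta>))"
      by (simp add: mult_left_mono)
  qed
  thus ?thesis .
qed

lemma ep_real_powr: "x > 0 \<Longrightarrow> ep (of_real \<sigma>) x = of_real (x powr (- \<sigma>))"
  by (simp add: ep_real powr_def)

lemma ZX_real_bound:
  assumes X: "X \<ge> x0" and \<sigma>: "\<sigma> > 1"
  shows "norm (ZX X (of_real \<sigma>)) \<le> (\<bar>A\<bar> + K) + \<bar>A\<bar> * \<sigma> / (\<sigma> - 1) + \<sigma> * D"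
proof -
  define s where "s = complex_of_real \<sigma>"
  have X1: "X \<ge> 1" using X x0_ge1 by linarith
  have Xp: "X > 0" using X1 by linarith
  have Re: "Re s > 1" using \<sigma> by (simp add: s_def)
  have "norm (of_real (N X) * ep s X) = N X * X powr (- \<sigma>)"
    using Xp N_nonneg[of X] by (simp add: norm_mult norm_ep s_def)
  also have "\<dots> \<le> (\<bar>A\<bar> + K) * X * X powr (- \<sigma>)"
    using N_bound[OF X] by (intro mult_right_mono) auto
  also have "\<dots> = (\<bar>A\<bar> + K) * X powr (1 - \<sigma>)"
    using Xp by (simp add: powr_diff powr_minus divide_inverse)
  also have "\<dots> \<le> (\<bar>A\<bar> + K) * 1"
    using X1 \<sigma> K by (intro mult_left_mono powr_le1') auto
  finally have t1: "norm (of_real (N X) * ep s X) \<le> \<bar>A\<bar> + K" by simp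
  have e1: "ep (s - 1) X = of_real (X powr (1 - \<sigma>))"
  proof -
    have e: "s - 1 = of_real (\<sigma> - 1)" by (simp add: s_def)
    have "ep (s - 1) X = of_real (X powr (- (\<sigma> - 1)))" unfolding e using Xp by (rule ep_real_powr)
    thus ?thesis by simp
  qed
  have "0 \<le> X powr (1 - \<sigma>)" "X powr (1 - \<sigma>) \<le> 1"
    using X1 \<sigma> by (auto intro!: powr_le1')
  hence "norm (1 - ep (s - 1) X) \<le> 1" unfolding e1 norm_1_minus_of_real by simp
  hence n1: "norm (1 - ep (s - 1) X) \<le> 1" .
  have ns: "norm s = \<sigma>" "norm (s - 1) = \<sigma> - 1" using \<sigma>
    by (simp_all add: s_def) (metis abs_of_pos diff_gt_0_iff_gt norm_of_real of_real_1 of_real_diff)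
  have "norm (of_real A * s * ((1 - ep (s - 1) X) / (s - 1))) = \<bar>A\<bar> * \<sigma> * norm (1 - ep (s - 1) X) / (\<sigma> - 1)"
    by (simp add: norm_mult norm_divide ns)
  also have "\<dots> \<le> \<bar>A\<bar> * \<sigma> * 1 / (\<sigma> - 1)"
    using \<sigma> n1 by (intro divide_right_mono mult_left_mono) auto
  finally have t2: "norm (of_real A * s * ((1 - ep (s - 1) X) / (s - 1))) \<le> \<bar>A\<bar> * \<sigma> / (\<sigma> - 1)" by simp
  have t3: "norm (s * J X s) \<le> \<sigma> * D"
    using J_bound[OF X Re] \<sigma> by (simp add: s_def norm_mult)
  have "norm (ZX X s) \<le> norm (of_real (N X) * ep s X) + norm (of_real A * s * ((1 - ep (s - 1) X) / (s - 1))) + norm (s * J X s)"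
    unfolding ZX_formula[OF X1 Re] by (intro order.trans[OF norm_triangle_ineq] add_mono norm_triangle_ineq order.refl)
  also have "\<dots> \<le> (\<bar>A\<bar> + K) + \<bar>A\<bar> * \<sigma> / (\<sigma> - 1) + \<sigma> * D" using t1 t2 t3 by linarith
  finally show ?thesis by (simp add: s_def)
qed

lemma summable_real:
  assumes \<sigma>: "\<sigma> > 1"
  shows "(\<lambda>g. nrm g powr (- \<sigma>)) summable_on UNIV"
proof (rule nonneg_bdd_above_summable_on)
  define M where "M = (\<bar>A\<bar> + K) + \<bar>A\<bar> * \<sigma> / (\<sigma> - 1) + \<sigma> * D"
  show "bdd_above (sum (\<lambda>g. nrm g powr (- \<sigma>)) ` {F. F \<subseteq> UNIV \<and> finite F})"
  proof (rule bdd_aboveI2)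
    fix F :: "'a set" assume "F \<in> {F. F \<subseteq> UNIV \<and> finite F}"
    hence F: "finite F" by auto
    define X where "X = max x0 (Max (insert 0 (nrm ` F)))"
    have X: "X \<ge> x0" by (simp add: X_def)
    have "F \<subseteq> FX X"
    proof
      fix g assume "g \<in> F"
      hence "nrm g \<le> Max (insert 0 (nrm ` F))" using F by (intro Max_ge) auto
      thus "g \<in> FX X" by (auto simp: FX_def X_def)
    qed
    hence le1: "sum (\<lambda>g. nrm g powr (- \<sigma>)) F \<le> sum (\<lambda>g. nrm g powr (- \<sigma>)) (FX X)"
      by (intro sum_mono2) auto
    have "ZX X (of_real \<sigma>) = of_real (sum (\<lambda>g. nrm g powr (- \<sigma>)) (FX X))"
      unfolding ZX_def of_real_sum using nrm_pos by (intro sum.cong) (simp_all add: ep_real_powr)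
    hence "norm (ZX X (of_real \<sigma>)) = \<bar>sum (\<lambda>g. nrm g powr (- \<sigma>)) (FX X)\<bar>"
      by (simp only: norm_of_real)
    hence "sum (\<lambda>g. nrm g powr (- \<sigma>)) (FX X) = norm (ZX X (of_real \<sigma>))"
      by (simp add: sum_nonneg)
    moreover have "norm (ZX X (of_real \<sigma>)) \<le> M" unfolding M_def by (rule ZX_real_bound[OF X \<sigma>])
    ultimately have "sum (\<lambda>g. nrm g powr (- \<sigma>)) F \<le> M" using le1 by linarith
    thus "sum (\<lambda>g. nrm g powr (- \<sigma>)) F \<le> M" .
  qed
qed auto

lemma summable_cplx:
  assumes "Re s > 1"
  shows "(\<lambda>g. norm (ep s (nrm g))) summable_on UNIV" "(\<lambda>g. ep s (nrm g)) summable_on UNIV"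
proof -
  have "(\<lambda>g. norm (ep s (nrm g))) = (\<lambda>g. nrm g powr (- Re s))"
    using nrm_pos by (simp add: norm_ep)
  thus "(\<lambda>g. norm (ep s (nrm g))) summable_on UNIV" using summable_real[OF assms] by simp
  thus "(\<lambda>g. ep s (nrm g)) summable_on UNIV" by (rule abs_summable_summable)
qed

definition Hh :: "complex \<Rightarrow> complex" where
  "Hh s = (Z s - of_real A * s / (s - 1)) / s"

lemma powr_tendsto0: "a < 0 \<Longrightarrow> ((\<lambda>X::real. X powr a) \<longlongrightarrow> 0) at_top"
  by (intro tendsto_neg_powr filterlim_ident)

lemma J_tendsto:
  assumes Re: "Re s > 1"
  shows "((\<lambda>X. J X s) \<longlongrightarrow> Hh s) at_top"
proof -
  have s: "s \<noteq> 0" "s \<noteq> 1" using Re by auto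
  have l1: "((\<lambda>X. ZX X s) \<longlongrightarrow> Z s) at_top"
    unfolding ZX_def Z_def by (rule tendsto_FX[OF summable_cplx(2)[OF Re]])
  have l2: "((\<lambda>X. of_real (N X) * ep s X) \<longlongrightarrow> 0) at_top"
  proof (rule Lim_null_comparison)
    show "\<forall>\<^sub>F X in at_top. norm (of_real (N X) * ep s X) \<le> (\<bar>A\<bar> + K) * X powr (1 - Re s)"
      using eventually_ge_at_top[of x0]
    proof eventually_elim
      case (elim X)
      hence Xp: "X > 0" using x0_ge1 by linarith
      have "norm (of_real (N X) * ep s X) = N X * X powr (- Re s)"
        using Xp N_nonneg[of X] by (simp add: norm_mult norm_ep)
      also have "\<dots> \<le> (\<bar>A\<bar> + K) * X * X powr (- Re s)"
        using N_bound[OF elim] by (intro mult_right_mono) auto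
      also have "\<dots> = (\<bar>A\<bar> + K) * X powr (1 - Re s)"
        using Xp by (simp add: powr_diff powr_minus divide_inverse)
      finally show ?case .
    qed
    show "((\<lambda>X. (\<bar>A\<bar> + K) * X powr (1 - Re s)) \<longlongrightarrow> 0) at_top"
      using tendsto_mult_right_zero[OF powr_tendsto0[of "1 - Re s"]] Re by simp
  qed
  have l3: "((\<lambda>X. ep (s - 1) X) \<longlongrightarrow> 0) at_top"
  proof (rule Lim_null_comparison)
    show "\<forall>\<^sub>F X in at_top. norm (ep (s - 1) X) \<le> X powr (1 - Re s)"
      using eventually_gt_at_top[of 0] by eventually_elim (simp add: norm_ep)
    show "((\<lambda>X. X powr (1 - Re s)) \<longlongrightarrow> 0) at_top" using powr_tendsto0 Re by simp
  qed
  have lim: "((\<lambda>X. (ZX X s - of_real (N X) * ep s X - of_real A * s * ((1 - ep (s - 1) X) / (s - 1))) / s)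
      \<longlongrightarrow> (Z s - 0 - of_real A * s * ((1 - 0) / (s - 1))) / s) at_top"
    using s by (intro tendsto_intros l1 l2 l3) auto
  have ev: "\<forall>\<^sub>F X in at_top. (ZX X s - of_real (N X) * ep s X - of_real A * s * ((1 - ep (s - 1) X) / (s - 1))) / s = J X s"
    using eventually_ge_at_top[of x0]
  proof eventually_elim
    case (elim X)
    hence X1: "X \<ge> 1" using x0_ge1 by linarith
    show ?case using ZX_formula[OF X1 Re] s by (simp add: field_simps)
  qed
  have "((\<lambda>X. J X s) \<longlongrightarrow> (Z s - 0 - of_real A * s * ((1 - 0) / (s - 1))) / s) at_top"
    using tendsto_cong[OF ev] lim by simp
  thus ?thesis by (simp add: Hh_def)
qed

lemma Hh_bound:
  assumes "Re s > 1" shows "norm (Hh s) \<le> D"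
  by (rule tendsto_upperbound[OF tendsto_norm[OF J_tendsto[OF assms]]])
     (use eventually_mono[OF eventually_ge_at_top[of x0]] J_bound assms in auto)

lemma Hh_diff:
  assumes "Re s > 1" "0 \<le> d" "d \<le> 1"
  shows "norm (Hh s - Hh (s + of_real d)) \<le> d powr \<theta> * D"
proof -
  have "Re (s + of_real d) > 1" using assms by simp
  have "((\<lambda>X. norm (J X s - J X (s + of_real d))) \<longlongrightarrow> norm (Hh s - Hh (s + of_real d))) at_top"
    by (intro tendsto_norm tendsto_diff J_tendsto assms \<open>Re (s + of_real d) > 1\<close>)
  thus ?thesis
    by (rule tendsto_upperbound)
       (use eventually_mono[OF eventually_ge_at_top[of x0]] J_diff_bound assms in auto)
qed

lemma Z_Hh:
  assumes "Re s > 1" shows "Z s = of_real A * s / (s - 1) + s * Hh s"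
proof -
  have "s \<noteq> 0" using assms by auto
  thus ?thesis by (simp add: Hh_def)
qed

end


lemma ep_Complex:
  assumes "x > 0"
  shows "ep (Complex \<sigma> \<tau>) x = of_real (x powr (- \<sigma>)) * exp (- (\<i> * of_real (\<tau> * ln x)))"
proof -
  have "ep (Complex \<sigma> \<tau>) x = ep (of_real \<sigma>) x * ep (\<i> * of_real \<tau>) x"
    by (simp add: Complex_eq ep_add)
  also have "ep (of_real \<sigma>) x = of_real (x powr (- \<sigma>))" using assms by (simp add: ep_real powr_def)
  also have "ep (\<i> * of_real \<tau>) x = exp (- (\<i> * of_real (\<tau> * ln x)))"
    by (simp add: ep_def mult_ac)
  finally show ?thesis .
qed

lemma exp_split:
  fixes a b c :: real
  shows "exp (- (\<i> * of_real ((a - b) * c))) = exp (- (\<i> * of_real (a * c))) * cnj (exp (- (\<i> * of_real (b * c))))"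
proof -
  have "cnj (exp (- (\<i> * of_real (b * c)))) = exp (\<i> * of_real (b * c))"
    by (simp add: exp_cnj)
  thus ?thesis by (simp add: algebra_simps flip: exp_add)
qed

lemma norm_exp_i: "norm (exp (- (\<i> * complex_of_real a))) = 1"
  by simp

context asgB
begin

definition Pset :: "real \<Rightarrow> 'a set" where "Pset y = {p. as_irreducible p \<and> nrm p \<le> y}"
definition ZPy :: "real \<Rightarrow> complex \<Rightarrow> complex" where
  "ZPy y s = infsum (\<lambda>g. ep s (nrm g)) (GP (Pset y))"

lemma finite_Pset: "finite (Pset y)"
  by (rule finite_subset[OF _ finite_le[of y]]) (auto simp: Pset_def)

lemma FX_sub_GP: "FX y \<subseteq> GP (Pset y)"
proof
  fix g assume "g \<in> FX y"
  hence g: "nrm g \<le> y" by (simp add: FX_def)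
  show "g \<in> GP (Pset y)"
    unfolding GP_def Pset_def using fact[of g] nrm_factor_le[of _ g] g by force
qed

lemma ZP_tendsto:
  assumes Re: "Re s > 1"
  shows "((\<lambda>y. ZPy y s) \<longlongrightarrow> Z s) at_top"
proof -
  define f where "f = (\<lambda>g. ep s (nrm g))"
  define nf where "nf = (\<lambda>g. norm (f g))"
  have sf: "f summable_on UNIV" using summable_cplx(2)[OF Re] by (simp add: f_def)
  have snf: "nf summable_on UNIV" using summable_cplx(1)[OF Re] by (simp add: nf_def f_def)
  have bound: "norm (Z s - ZPy y s) \<le> infsum nf UNIV - sum nf (FX y)" for y
  proof -
    have sGP: "f summable_on GP (Pset y)" using sf by (rule summable_on_subset_banach) auto
    have "Z s - ZPy y s = infsum f (UNIV - GP (Pset y))"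
      unfolding Z_def ZPy_def f_def[symmetric] by (rule infsum_Diff[symmetric, OF sf sGP]) auto
    also have "norm \<dots> \<le> infsum nf (UNIV - GP (Pset y))"
      unfolding nf_def by (rule norm_infsum_bound) (rule summable_on_subset_banach[OF snf[unfolded nf_def]], auto)
    also have "\<dots> \<le> infsum nf (UNIV - FX y)"
      using FX_sub_GP[of y]
      by (intro infsum_mono_neutral summable_on_subset_banach[OF snf]) (auto simp: nf_def)
    also have "\<dots> = infsum nf UNIV - infsum nf (FX y)"
      by (rule infsum_Diff[OF snf]) auto
    also have "\<dots> = infsum nf UNIV - sum nf (FX y)" by simp
    finally show ?thesis .
  qed
  have "((\<lambda>y. infsum nf UNIV - sum nf (FX y)) \<longlongrightarrow> infsum nf UNIV - infsum nf UNIV) at_top"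
    by (intro tendsto_diff tendsto_const tendsto_FX snf)
  hence lim0: "((\<lambda>y. infsum nf UNIV - sum nf (FX y)) \<longlongrightarrow> 0) at_top" by simp
  have "((\<lambda>y. Z s - ZPy y s) \<longlongrightarrow> 0) at_top"
  proof (rule Lim_null_comparison)
    show "\<forall>\<^sub>F y in at_top. norm (Z s - ZPy y s) \<le> infsum nf UNIV - sum nf (FX y)"
      using bound by (intro always_eventually) auto
  qed (rule lim0)
  hence "((\<lambda>y. Z s - (Z s - ZPy y s)) \<longlongrightarrow> Z s - 0) at_top"
    by (intro tendsto_diff tendsto_const)
  thus ?thesis by simp
qed

lemma ZPy_prod:
  assumes \<sigma>: "\<sigma> > 0"
  shows "(\<Prod>l<n. \<Prod>l'<n. norm (ZPy y (Complex \<sigma> ((real l - real l') * t)))) \<ge> 1"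
proof -
  define P where "P = Pset y"
  have fP: "finite P" using finite_Pset by (simp add: P_def)
  have iP: "\<forall>p\<in>P. as_irreducible p" by (auto simp: P_def Pset_def)
  define r where "r p = nrm p powr (- \<sigma>)" for p
  define u where "u p l = exp (- (\<i> * of_real (real l * t * ln (nrm p))))" for p l
  have w: "ep (Complex \<sigma> ((real l - real l') * t)) (nrm p) = of_real (r p) * u p l * cnj (u p l')" for p l l'
    unfolding ep_Complex[OF nrm_pos] r_def u_def
    using exp_split[of "real l" "real l'" "t * ln (nrm p)"] by (simp add: mult_ac)
  have nZ: "norm (ZPy y (Complex \<sigma> ((real l - real l') * t))) =
      (\<Prod>p\<in>P. 1 / norm (1 - of_real (r p) * u p l * cnj (u p l')))" for l l'
  proof -
    have "ZPy y (Complex \<sigma> ((real l - real l') * t)) = (\<Prod>p\<in>P. 1 / (1 - ep (Complex \<sigma> ((real l - real l') * t)) (nrm p)))"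
      unfolding ZPy_def P_def[symmetric] using \<sigma> by (intro ZP_euler[OF fP iP]) auto
    thus ?thesis by (simp add: w prod_norm[symmetric] norm_divide)
  qed
  have "(\<Prod>l<n. \<Prod>l'<n. norm (ZPy y (Complex \<sigma> ((real l - real l') * t))))
      = (\<Prod>l<n. \<Prod>l'<n. \<Prod>p\<in>P. 1 / norm (1 - of_real (r p) * u p l * cnj (u p l')))"
    by (simp add: nZ)
  also have "\<dots> = (\<Prod>p\<in>P. \<Prod>l<n. \<Prod>l'<n. 1 / norm (1 - of_real (r p) * u p l * cnj (u p l')))"
    by (subst prod.swap) (subst (2) prod.swap, rule refl)
  also have "\<dots> \<ge> 1"
  proof (rule prod_ge_1)
    fix p assume p: "p \<in> P"
    have r: "0 \<le> r p" "r p < 1"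
      using irr_gt1[of p] iP p \<sigma> by (auto simp: r_def intro!: powr_less_one)
    have nu: "norm (u p l) = 1" for l by (simp add: u_def)
    have ne: "norm (1 - of_real (r p) * u p l * cnj (u p l')) > 0" for l l'
    proof -
      have "norm (of_real (r p) * u p l * cnj (u p l')) = r p" using r nu by (simp add: norm_mult)
      thus ?thesis using r by auto
    qed
    have le: "(\<Prod>l<n. \<Prod>l'<n. norm (1 - of_real (r p) * u p l * cnj (u p l'))) \<le> 1"
      by (rule trig_ineq[OF r nu])
    have pos: "(\<Prod>l<n. \<Prod>l'<n. norm (1 - of_real (r p) * u p l * cnj (u p l'))) > 0"
      using ne by (intro prod_pos) auto
    have "(\<Prod>l<n. \<Prod>l'<n. 1 / norm (1 - of_real (r p) * u p l * cnj (u p l')))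
        = 1 / (\<Prod>l<n. \<Prod>l'<n. norm (1 - of_real (r p) * u p l * cnj (u p l')))"
      by (simp add: prod_dividef)
    also have "\<dots> \<ge> 1" using le pos by simp
    finally show "1 \<le> (\<Prod>l<n. \<Prod>l'<n. 1 / norm (1 - of_real (r p) * u p l * cnj (u p l')))" .
  qed
  finally show ?thesis .
qed

lemma Z_prod:
  assumes \<sigma>: "\<sigma> > 1"
  shows "(\<Prod>l<n. \<Prod>l'<n. norm (Z (Complex \<sigma> ((real l - real l') * t)))) \<ge> 1"
proof -
  have "((\<lambda>y. \<Prod>l<n. \<Prod>l'<n. norm (ZPy y (Complex \<sigma> ((real l - real l') * t)))) \<longlongrightarrow>
        (\<Prod>l<n. \<Prod>l'<n. norm (Z (Complex \<sigma> ((real l - real l') * t))))) at_top"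
    using \<sigma> by (intro tendsto_prod tendsto_norm ZP_tendsto) auto
  thus ?thesis
    by (rule tendsto_lowerbound) (use ZPy_prod \<sigma> in auto)
qed

end


lemma lim_inv: "(\<lambda>n. 1 / (real n + 1)) \<longlonglongrightarrow> 0"
proof -
  have "(\<lambda>n. inverse (real (Suc n))) \<longlonglongrightarrow> 0" by (rule LIMSEQ_inverse_real_of_nat)
  thus ?thesis by (simp add: divide_inverse add.commute)
qed

lemma holder_limit:
  fixes f :: "real \<Rightarrow> complex"
  assumes C: "C > 0" and th: "\<theta> > 0"
    and H: "\<And>x y. 1 < y \<Longrightarrow> y \<le> x \<Longrightarrow> x \<le> 2 \<Longrightarrow> norm (f x - f y) \<le> C * (x - y) powr \<theta>"
  shows "\<exists>L. (f \<longlongrightarrow> L) (at_right 1) \<and> (\<forall>x. 1 < x \<and> x \<le> 2 \<longrightarrow> norm (f x - L) \<le> C * (x - 1) powr \<theta>)"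
proof -
  define xs where "xs n = 1 + 1 / (real n + 1)" for n :: nat
  have xs: "1 < xs n" "xs n \<le> 2" for n by (auto simp: xs_def field_simps)
  have H': "norm (f x - f y) \<le> C * \<bar>x - y\<bar> powr \<theta>" if "1 < x" "x \<le> 2" "1 < y" "y \<le> 2" for x y
  proof (cases "y \<le> x")
    case True thus ?thesis using H that by simp
  next
    case False
    hence "norm (f y - f x) \<le> C * (y - x) powr \<theta>" using H that by simp
    thus ?thesis using False by (simp add: norm_minus_commute)
  qed
  have lim0: "((\<lambda>M. C * (1 / (real M + 1)) powr \<theta>) \<longlongrightarrow> 0) sequentially"
  proof -
    have "((\<lambda>M. (1 / (real M + 1)) powr \<theta>) \<longlongrightarrow> 0) sequentially"
      by (rule tendsto_zero_powrI[OF lim_inv tendsto_const]) (use th in auto)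
    thus ?thesis using tendsto_mult_right_zero by blast
  qed
  have cauchy: "Cauchy (\<lambda>n. f (xs n))"
  proof (rule metric_CauchyI)
    fix e :: real assume "e > 0"
    from order_tendstoD(2)[OF lim0 this] obtain M where M: "\<And>m. m \<ge> M \<Longrightarrow> C * (1 / (real m + 1)) powr \<theta> < e"
      by (auto simp: eventually_sequentially)
    show "\<exists>M. \<forall>m\<ge>M. \<forall>n\<ge>M. dist (f (xs m)) (f (xs n)) < e"
    proof (intro exI allI impI)
      fix m n assume mn: "M \<le> m" "M \<le> n"
      have a: "0 < 1 / (real m + 1)" "1 / (real m + 1) \<le> 1 / (real M + 1)"
              "0 < 1 / (real n + 1)" "1 / (real n + 1) \<le> 1 / (real M + 1)"
        using mn by (auto intro!: divide_left_mono)
      have "\<bar>xs m - xs n\<bar> \<le> 1 / (real M + 1)"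
        unfolding xs_def abs_le_iff using a by (intro conjI) linarith+
      hence "\<bar>xs m - xs n\<bar> powr \<theta> \<le> (1 / (real M + 1)) powr \<theta>"
        using th by (intro powr_mono2) auto
      hence "dist (f (xs m)) (f (xs n)) \<le> C * (1 / (real M + 1)) powr \<theta>"
        using H'[OF xs(1,2) xs(1,2), of m n] C by (simp add: dist_norm) (meson mult_left_mono less_imp_le order.trans)
      also have "\<dots> < e" using M by simp
      finally show "dist (f (xs m)) (f (xs n)) < e" .
    qed
  qed
  then obtain L where L: "(\<lambda>n. f (xs n)) \<longlonglongrightarrow> L" by (auto simp: Cauchy_convergent_iff convergent_def)
  have bound: "norm (f x - L) \<le> C * (x - 1) powr \<theta>" if x: "1 < x" "x \<le> 2" for x
  proof -
    have "((\<lambda>n. norm (f x - f (xs n))) \<longlonglongrightarrow> norm (f x - L))"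
      by (intro tendsto_intros L)
    moreover have "\<forall>\<^sub>F n in sequentially. norm (f x - f (xs n)) \<le> C * (x - 1) powr \<theta>"
    proof -
      have "((\<lambda>n. xs n) \<longlonglongrightarrow> 1 + 0)" unfolding xs_def
        by (intro tendsto_intros lim_inv)
      from order_tendstoD(2)[OF this, of x] x have "\<forall>\<^sub>F n in sequentially. xs n < x" by simp
      thus ?thesis
      proof eventually_elim
        case (elim n)
        have "norm (f x - f (xs n)) \<le> C * (x - xs n) powr \<theta>" using H[OF xs(1) _ x(2)] elim by simp
        also have "(x - xs n) powr \<theta> \<le> (x - 1) powr \<theta>" using xs(1)[of n] elim th by (intro powr_mono2) auto
        hence "C * (x - xs n) powr \<theta> \<le> C * (x - 1) powr \<theta>" using C by simp
        finally show ?case .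
      qed
    qed
    ultimately show ?thesis by (rule tendsto_upperbound) simp
  qed
  have "((\<lambda>x. f x - L) \<longlongrightarrow> 0) (at_right 1)"
  proof (rule Lim_null_comparison)
    show "\<forall>\<^sub>F x in at_right 1. norm (f x - L) \<le> C * (x - 1) powr \<theta>"
      using eventually_mono[OF eventually_at_right_real[of 1 2]] bound by auto
    have "((\<lambda>x. (x - 1) powr \<theta>) \<longlongrightarrow> 0) (at_right (1::real))"
    proof (rule tendsto_zero_powrI[OF _ tendsto_const])
      show "((\<lambda>x. x - 1) \<longlongrightarrow> 0) (at_right (1::real))"
        using tendsto_diff[OF tendsto_ident_at[of 1 "{1<..}"] tendsto_const[of 1]] by simp
      show "\<forall>\<^sub>F x in at_right 1. 0 \<le> x - (1::real)"
        using eventually_mono[OF eventually_at_right_less[of "1::real"]] by auto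
    qed (use th in auto)
    thus "((\<lambda>x. C * (x - 1) powr \<theta>) \<longlongrightarrow> 0) (at_right 1)"
      using tendsto_mult_right_zero by blast
  qed
  hence "((\<lambda>x. f x - L + L) \<longlongrightarrow> 0 + L) (at_right 1)" by (intro tendsto_intros)
  hence "(f \<longlongrightarrow> L) (at_right 1)" by simp
  thus ?thesis using bound by blast
qed

lemma le_powr_small:
  fixes d \<theta> :: real
  assumes "0 \<le> d" "d \<le> 1" "0 < \<theta>" "\<theta> \<le> 1"
  shows "d \<le> d powr \<theta>"
proof (cases "d = 0")
  case False
  have "d powr 1 \<le> d powr \<theta>" using assms by (intro powr_mono') auto
  thus ?thesis using False assms by simp
qed simp

context asgB
begin

lemma D_nonneg: "D \<ge> 0"
proof -
  have "B1 \<ge> 0" unfolding B1_def using N_nonneg[of x0] x0_ge1 by (intro mult_nonneg_nonneg) auto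
  thus ?thesis unfolding D_def using x0_ge1 K q by (intro add_nonneg_nonneg mult_nonneg_nonneg divide_nonneg_nonneg) auto
qed

lemma Z_cnj: "Z (cnj s) = cnj (Z s)"
  unfolding Z_def by (simp add: ep_cnj)

definition Ec where "Ec = \<bar>A\<bar> + 3 * D + 1"
definition Fc where "Fc = 2 * \<bar>A\<bar> + 2 * D + 1"

lemma Ec_pos: "Ec > 0" using D_nonneg by (simp add: Ec_def)
lemma Fc_pos: "Fc \<ge> 1" using D_nonneg by (simp add: Fc_def)

lemma Z_holder:
  assumes t: "t \<ge> 2" and s: "1 < \<sigma>'" "\<sigma>' \<le> \<sigma>" "\<sigma> \<le> 2"
  shows "norm (Z (Complex \<sigma> t) - Z (Complex \<sigma>' t)) \<le> Ec * t * (\<sigma> - \<sigma>') powr \<theta>"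
proof -
  define d where "d = \<sigma> - \<sigma>'"
  define s' where "s' = Complex \<sigma>' t"
  define s where "s = Complex \<sigma> t"
  have d: "0 \<le> d" "d \<le> 1" using s by (auto simp: d_def)
  have ss: "s = s' + of_real d" by (simp add: s_def s'_def d_def complex_eq_iff)
  have Re: "Re s > 1" "Re s' > 1" using s by (auto simp: s_def s'_def)
  have ne: "s - 1 \<noteq> 0" "s' - 1 \<noteq> 0" using Re by auto
  have nt: "norm (s - 1) \<ge> t" "norm (s' - 1) \<ge> t"
    using abs_Im_le_cmod[of "s - 1"] abs_Im_le_cmod[of "s' - 1"] t by (auto simp: s_def s'_def)
  have dd: "d \<le> d powr \<theta>" using d th by (intro le_powr_small) auto
  have ns': "norm s' \<le> 2 * t"
    using cmod_le[of s'] s t by (simp add: s'_def)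
  have eq: "Z s - Z s' = of_real A * (- of_real d / ((s - 1) * (s' - 1))) + (of_real d * Hh s + s' * (Hh s - Hh s'))"
  proof -
    have "Z s - Z s' = of_real A * (s / (s - 1) - s' / (s' - 1)) + (s * Hh s - s' * Hh s')"
      using Z_Hh[OF Re(1)] Z_Hh[OF Re(2)] by (simp add: algebra_simps)
    also have "s / (s - 1) - s' / (s' - 1) = - of_real d / ((s - 1) * (s' - 1))"
      using ne by (simp add: field_simps ss)
    also have "s * Hh s - s' * Hh s' = of_real d * Hh s + s' * (Hh s - Hh s')"
      by (simp add: ss algebra_simps)
    finally show ?thesis .
  qed
  have t1: "norm (of_real A * (- of_real d / ((s - 1) * (s' - 1)))) \<le> \<bar>A\<bar> * d"
  proof -
    have "t * t \<le> norm (s - 1) * norm (s' - 1)" using nt t by (intro mult_mono) auto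
    moreover have "1 \<le> t * t" using t mult_mono[of 1 t 1 t] by simp
    ultimately have X1: "1 \<le> norm (s - 1) * norm (s' - 1)" by linarith
    have "d / (norm (s - 1) * norm (s' - 1)) \<le> d / 1"
      using d X1 by (intro divide_left_mono) auto
    hence "d / (norm (s - 1) * norm (s' - 1)) \<le> d" by simp
    hence "\<bar>A\<bar> * (d / (norm (s - 1) * norm (s' - 1))) \<le> \<bar>A\<bar> * d" by (intro mult_left_mono) auto
    thus ?thesis using d by (simp add: norm_mult norm_divide)
  qed
  have t2: "norm (of_real d * Hh s) \<le> d * D" using Hh_bound[OF Re(1)] d by (simp add: norm_mult mult_left_mono)
  have t3: "norm (s' * (Hh s - Hh s')) \<le> 2 * t * (d powr \<theta> * D)"
  proof -
    have "norm (Hh s - Hh s') = norm (Hh s' - Hh (s' + of_real d))" by (simp add: ss norm_minus_commute)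
    also have "\<dots> \<le> d powr \<theta> * D" by (rule Hh_diff[OF Re(2) d])
    finally show ?thesis using ns' t by (simp add: norm_mult) (intro mult_mono, auto intro: D_nonneg)
  qed
  have "norm (Z s - Z s') \<le> \<bar>A\<bar> * d + d * D + 2 * t * (d powr \<theta> * D)"
  proof -
    have "norm (Z s - Z s') \<le> norm (of_real A * (- of_real d / ((s - 1) * (s' - 1)))) + norm (of_real d * Hh s + s' * (Hh s - Hh s'))"
      unfolding eq by (rule norm_triangle_ineq)
    moreover have "norm (of_real d * Hh s + s' * (Hh s - Hh s')) \<le> norm (of_real d * Hh s) + norm (s' * (Hh s - Hh s'))"
      by (rule norm_triangle_ineq)
    ultimately show ?thesis using t1 t2 t3 by linarith
  qed
  also have "\<dots> \<le> \<bar>A\<bar> * d powr \<theta> + d powr \<theta> * D + 2 * t * (d powr \<theta> * D)"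
    using dd D_nonneg by (intro add_mono mult_left_mono mult_right_mono) auto
  also have "\<dots> \<le> Ec * t * d powr \<theta>"
  proof -
    define P where "P = d powr \<theta>"
    have P: "P \<ge> 0" by (simp add: P_def)
    have a1: "\<bar>A\<bar> \<le> \<bar>A\<bar> * t" using t mult_left_mono[of 1 t "\<bar>A\<bar>"] by simp
    have a2: "D \<le> D * t" using t D_nonneg mult_left_mono[of 1 t D] by simp
    have a3: "Ec * t = \<bar>A\<bar> * t + 3 * (D * t) + t" by (simp add: Ec_def algebra_simps)
    have "\<bar>A\<bar> + D + 2 * t * D \<le> Ec * t" using a1 a2 a3 t by (simp add: algebra_simps)
    hence "P * (\<bar>A\<bar> + D + 2 * t * D) \<le> P * (Ec * t)" using P by (rule mult_left_mono)
    thus ?thesis unfolding P_def[symmetric] by (simp add: algebra_simps)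
  qed
  finally show ?thesis by (simp add: s_def s'_def d_def)
qed

lemma boundary:
  assumes t: "t \<ge> 2"
  shows "\<exists>L. ((\<lambda>\<sigma>. Z (Complex \<sigma> t)) \<longlongrightarrow> L) (at_right 1) \<and>
     (\<forall>\<sigma>. 1 < \<sigma> \<and> \<sigma> \<le> 2 \<longrightarrow> norm (Z (Complex \<sigma> t) - L) \<le> Ec * t * (\<sigma> - 1) powr \<theta>)"
  using holder_limit[of "Ec * t" \<theta> "\<lambda>\<sigma>. Z (Complex \<sigma> t)"] Z_holder[OF t] Ec_pos t th
  by (simp add: mult.assoc)

lemma Z_real_bound:
  assumes "1 < \<sigma>" "\<sigma> \<le> 2"
  shows "norm (Z (Complex \<sigma> 0)) \<le> Fc / (\<sigma> - 1)"
proof -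
  define s where "s = Complex \<sigma> 0"
  have s: "s = of_real \<sigma>" by (simp add: s_def complex_eq_iff)
  have Re: "Re s > 1" using assms by (simp add: s)
  have ns: "norm s = \<sigma>" "norm (s - 1) = \<sigma> - 1" using assms
    by (simp_all add: s) (metis abs_of_pos diff_gt_0_iff_gt norm_of_real of_real_1 of_real_diff)
  have "norm (Z s) \<le> norm (of_real A * s / (s - 1)) + norm (s * Hh s)"
    unfolding Z_Hh[OF Re] by (rule norm_triangle_ineq)
  also have "norm (of_real A * s / (s - 1)) = \<bar>A\<bar> * \<sigma> / (\<sigma> - 1)" by (simp add: norm_mult norm_divide ns)
  also have "norm (s * Hh s) \<le> \<sigma> * D" using Hh_bound[OF Re] assms by (simp add: norm_mult ns mult_left_mono)
  also have "\<bar>A\<bar> * \<sigma> / (\<sigma> - 1) \<le> 2 * \<bar>A\<bar> / (\<sigma> - 1)"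
    using assms mult_left_mono[of \<sigma> 2 "\<bar>A\<bar>"] by (intro divide_right_mono) (auto simp: mult.commute)
  also have "\<sigma> * D \<le> (2 * D + 1) / (\<sigma> - 1)"
  proof -
    have "\<sigma> * D \<le> 2 * D" using assms D_nonneg by (intro mult_right_mono) auto
    also have "\<dots> \<le> (2 * D + 1) / 1" by simp
    also have "\<dots> \<le> (2 * D + 1) / (\<sigma> - 1)" using assms D_nonneg by (intro divide_left_mono) auto
    finally show ?thesis .
  qed
  also have "2 * \<bar>A\<bar> / (\<sigma> - 1) + (2 * D + 1) / (\<sigma> - 1) = Fc / (\<sigma> - 1)"
    by (simp add: Fc_def add_divide_distrib)
  finally show ?thesis by (simp add: s_def)
qed

lemma Z_far_bound:
  assumes "1 < \<sigma>" "\<sigma> \<le> 2" "\<bar>\<tau>\<bar> \<ge> 2"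
  shows "norm (Z (Complex \<sigma> \<tau>)) \<le> Fc * \<bar>\<tau>\<bar>"
proof -
  define s where "s = Complex \<sigma> \<tau>"
  have Re: "Re s > 1" using assms by (simp add: s_def)
  have ns: "norm s \<le> 2 * \<bar>\<tau>\<bar>" using cmod_le[of s] assms by (simp add: s_def)
  have ns1: "norm (s - 1) \<ge> 1" using abs_Im_le_cmod[of "s - 1"] assms by (simp add: s_def)
  have "norm (Z s) \<le> norm (of_real A * s / (s - 1)) + norm (s * Hh s)"
    unfolding Z_Hh[OF Re] by (rule norm_triangle_ineq)
  also have "norm (of_real A * s / (s - 1)) \<le> \<bar>A\<bar> * norm s"
  proof -
    have "norm s / norm (s - 1) \<le> norm s / 1" using ns1 by (intro divide_left_mono) auto
    hence "\<bar>A\<bar> * (norm s / norm (s - 1)) \<le> \<bar>A\<bar> * norm s" by (intro mult_left_mono) auto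
    thus ?thesis by (simp add: norm_mult norm_divide)
  qed
  also have "norm (s * Hh s) \<le> norm s * D" using Hh_bound[OF Re] by (simp add: norm_mult mult_left_mono)
  also have "\<bar>A\<bar> * norm s + norm s * D = (\<bar>A\<bar> + D) * norm s" by (simp add: algebra_simps)
  also have "\<dots> \<le> (\<bar>A\<bar> + D) * (2 * \<bar>\<tau>\<bar>)" using ns D_nonneg by (intro mult_left_mono) auto
  also have "\<dots> \<le> Fc * \<bar>\<tau>\<bar>" by (simp add: Fc_def algebra_simps)
  finally show ?thesis by (simp add: s_def)
qed

end

lemma prod_count:
  fixes a b c :: real
  shows "(\<Prod>l<Suc m. \<Prod>l'<Suc m. (if l = l' then a else if l = Suc l' \<or> l' = Suc l then b else c))
     = a ^ Suc m * b ^ (2 * m) * c ^ (m * (m - 1))"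
proof (induction m)
  case 0 thus ?case by simp
next
  case (Suc m)
  define h where "h l l' = (if l = l' then a else if l = Suc l' \<or> l' = Suc l then b else c)" for l l' :: nat
  have col: "(\<Prod>l<Suc m. h l (Suc m)) = c ^ m * b"
  proof -
    have "(\<Prod>l<m. h l (Suc m)) = (\<Prod>l<m. c)" by (intro prod.cong) (auto simp: h_def)
    thus ?thesis by (simp add: h_def)
  qed
  have row: "(\<Prod>l'<Suc m. h (Suc m) l') = c ^ m * b"
  proof -
    have "(\<Prod>l'<m. h (Suc m) l') = (\<Prod>l<m. c)" by (intro prod.cong) (auto simp: h_def)
    thus ?thesis by (simp add: h_def)
  qed
  have IH': "(\<Prod>l<Suc m. \<Prod>l'<Suc m. h l l') = a ^ Suc m * b ^ (2 * m) * c ^ (m * (m - 1))"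
    using Suc.IH by (simp add: h_def)
  have hSS: "h (Suc m) (Suc m) = a" by (simp add: h_def)
  have "(\<Prod>l<Suc (Suc m). \<Prod>l'<Suc (Suc m). h l l')
      = (\<Prod>l<Suc m. (\<Prod>l'<Suc m. h l l') * h l (Suc m)) * ((\<Prod>l'<Suc m. h (Suc m) l') * h (Suc m) (Suc m))"
    by (simp only: prod.lessThan_Suc[of _ "Suc m"])
  also have "\<dots> = (\<Prod>l<Suc m. \<Prod>l'<Suc m. h l l') * (\<Prod>l<Suc m. h l (Suc m)) * ((\<Prod>l'<Suc m. h (Suc m) l') * h (Suc m) (Suc m))"
    by (simp only: prod.distrib)
  also have "\<dots> = a ^ Suc m * b ^ (2 * m) * c ^ (m * (m - 1)) * (c ^ m * b) * ((c ^ m * b) * a)"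
    by (simp only: IH' col row hSS)
  also have "\<dots> = a ^ Suc (Suc m) * b ^ (2 * Suc m) * c ^ (Suc m * (Suc m - 1))"
  proof -
    have e: "m * (m - 1) + m + m = Suc m * (Suc m - 1)" by (cases m) auto
    have "a ^ Suc m * b ^ (2 * m) * c ^ (m * (m - 1)) * (c ^ m * b) * ((c ^ m * b) * a)
        = a ^ Suc (Suc m) * b ^ (2 * Suc m) * c ^ (m * (m - 1) + m + m)"
      by (simp only: power_add power_Suc mult_2) (simp only: mult_ac)
    thus ?thesis unfolding e .
  qed
  finally show ?case by (simp add: h_def)
qed

lemma root_bound:
  fixes a b c :: real
  assumes m: "m \<ge> 1" and a: "a > 0" and c: "c > 0" and b: "b \<ge> 0"
    and P: "1 \<le> a ^ Suc m * b ^ (2 * m) * c ^ (m * (m - 1))"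
  shows "b \<ge> a powr (- (real (Suc m) / (2 * real m))) * c powr (- ((real m - 1) / 2))"
proof -
  have "b \<noteq> 0" using P m by (cases "b = 0") (auto simp: zero_power)
  hence bp: "b > 0" using b by simp
  have "0 \<le> ln (a ^ Suc m * b ^ (2 * m) * c ^ (m * (m - 1)))" using P by simp
  also have "\<dots> = real (Suc m) * ln a + real (2 * m) * ln b + real (m * (m - 1)) * ln c"
    using a bp c by (simp add: ln_mult ln_realpow algebra_simps)
  finally have L: "0 \<le> real (Suc m) * ln a + 2 * real m * ln b + real m * (real m - 1) * ln c"
    using m by (simp add: of_nat_diff)
  have mp: "real m > 0" using m by simp
  have "ln b \<ge> - (real (Suc m) / (2 * real m)) * ln a - ((real m - 1) / 2) * ln c"
  proof -
    have "0 \<le> (real (Suc m) * ln a + 2 * real m * ln b + real m * (real m - 1) * ln c) / (2 * real m)"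
      using L mp by simp
    also have "\<dots> = ln b + (real (Suc m) / (2 * real m)) * ln a + ((real m - 1) / 2) * ln c"
      using mp by (simp add: field_simps)
    finally show ?thesis by linarith
  qed
  hence "exp (- (real (Suc m) / (2 * real m)) * ln a - ((real m - 1) / 2) * ln c) \<le> exp (ln b)"
    by simp
  also have "exp (ln b) = b" using bp by simp
  also have "exp (- (real (Suc m) / (2 * real m)) * ln a - ((real m - 1) / 2) * ln c)
      = a powr (- (real (Suc m) / (2 * real m))) * c powr (- ((real m - 1) / 2))"
    using a c by (simp add: powr_def exp_diff exp_minus field_simps flip: exp_add)
  finally show ?thesis by simp
qed

context asgB
begin

lemma y_lower:
  assumes t: "t \<ge> 2" and n: "n \<ge> 2" and \<delta>: "0 < \<delta>" "\<delta> \<le> 1"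
  shows "norm (Z (Complex (1 + \<delta>) t)) \<ge>
     (Fc / \<delta>) powr (- (real n / (2 * (real n - 1)))) * (Fc * real n * t) powr (- ((real n - 2) / 2))"
proof -
  define \<sigma> where "\<sigma> = 1 + \<delta>"
  have \<sigma>: "1 < \<sigma>" "\<sigma> \<le> 2" using \<delta> by (auto simp: \<sigma>_def)
  define y where "y = norm (Z (Complex \<sigma> t))"
  obtain m where nm: "n = Suc m" and m: "m \<ge> 1" using n by (cases n) auto
  define h where "h l l' = (if l = l' then Fc / \<delta> else if l = Suc l' \<or> l' = Suc l then y else Fc * real n * t)" for l l' :: nat
  have le: "norm (Z (Complex \<sigma> ((real l - real l') * t))) \<le> h l l'" if l: "l < n" "l' < n" for l l'
  proof (cases "l = l'")
    case True
    thus ?thesis using Z_real_bound[OF \<sigma>] by (simp add: h_def \<sigma>_def)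
  next
    case ne: False
    show ?thesis
    proof (cases "l = Suc l'")
      case True
      hence "(real l - real l') * t = t" by simp
      thus ?thesis using True by (simp add: h_def y_def)
    next
      case ne2: False
      show ?thesis
      proof (cases "l' = Suc l")
        case True
        hence "Complex \<sigma> ((real l - real l') * t) = cnj (Complex \<sigma> t)" by (simp add: complex_eq_iff)
        thus ?thesis using True ne by (simp add: h_def y_def Z_cnj)
      next
        case False
        have d2: "\<bar>real l - real l'\<bar> \<ge> 2" using ne ne2 False by linarith
        have dn: "\<bar>real l - real l'\<bar> \<le> real n" using l by linarith
        have "\<bar>(real l - real l') * t\<bar> = \<bar>real l - real l'\<bar> * t" using t by (simp add: abs_mult)
        moreover have "\<bar>real l - real l'\<bar> * t \<ge> 2" using d2 t mult_mono[of 2 "\<bar>real l - real l'\<bar>" 1 t] by simp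
        ultimately have "norm (Z (Complex \<sigma> ((real l - real l') * t))) \<le> Fc * (\<bar>real l - real l'\<bar> * t)"
          using Z_far_bound[OF \<sigma>, of "(real l - real l') * t"] by simp
        also have "\<dots> \<le> Fc * (real n * t)" using dn t Fc_pos by (intro mult_left_mono mult_right_mono) auto
        finally show ?thesis using ne ne2 False by (simp add: h_def mult.assoc)
      qed
    qed
  qed
  have "1 \<le> (\<Prod>l<n. \<Prod>l'<n. norm (Z (Complex \<sigma> ((real l - real l') * t))))" by (rule Z_prod[OF \<sigma>(1)])
  also have "\<dots> \<le> (\<Prod>l<n. \<Prod>l'<n. h l l')"
    using le by (intro prod_mono conjI prod_nonneg) auto
  also have "\<dots> = (Fc / \<delta>) ^ Suc m * y ^ (2 * m) * (Fc * real n * t) ^ (m * (m - 1))"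
    unfolding nm h_def by (rule prod_count)
  finally have P: "1 \<le> (Fc / \<delta>) ^ Suc m * y ^ (2 * m) * (Fc * real n * t) ^ (m * (m - 1))" .
  have "y \<ge> (Fc / \<delta>) powr (- (real (Suc m) / (2 * real m))) * (Fc * real n * t) powr (- ((real m - 1) / 2))"
    using Fc_pos \<delta> t n by (intro root_bound[OF m _ _ _ P]) (auto simp: y_def)
  moreover have "real n = real (Suc m)" "real n - 1 = real m" "real n - 2 = real m - 1" using nm by auto
  ultimately show ?thesis by (simp add: y_def \<sigma>_def)
qed

definition Zb :: "real \<Rightarrow> complex" where
  "Zb t = Lim (at_right 1) (\<lambda>\<sigma>. Z (Complex \<sigma> t))"

lemma final_bound:
  assumes n: "n \<ge> 2" and \<alpha>: "real n / (2 * (real n - 1)) < \<theta>"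
  shows "\<exists>c>0. \<forall>t\<ge>2. norm (Zb t) \<ge> c * t powr (- ((real n - 2) / 2 +
      (real n / (2 * (real n - 1))) * ((real n - 2) / 2 + 1) / (\<theta> - real n / (2 * (real n - 1)))))"
proof -
  define \<alpha> where "\<alpha> = real n / (2 * (real n - 1))"
  define \<beta> where "\<beta> = (real n - 2) / 2"
  have \<alpha>0: "\<alpha> > 0" using n by (simp add: \<alpha>_def)
  have \<beta>0: "\<beta> \<ge> 0" using n by (simp add: \<beta>_def)
  have ta: "\<theta> - \<alpha> > 0" using \<alpha> by (simp add: \<alpha>_def)
  define c1 where "c1 = Fc powr (- \<alpha>) * (Fc * real n) powr (- \<beta>)"
  have c1: "c1 > 0" using Fc_pos n by (simp add: c1_def)
  define p where "p = (\<beta> + 1) / (\<theta> - \<alpha>)"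
  have p: "p > 0" using \<beta>0 ta by (simp add: p_def)
  define \<kappa> where "\<kappa> = min 1 ((c1 / (2 * Ec)) powr (1 / (\<theta> - \<alpha>)))"
  have \<kappa>: "\<kappa> > 0" "\<kappa> \<le> 1" using c1 Ec_pos by (auto simp: \<kappa>_def)
  have \<kappa>2: "\<kappa> powr (\<theta> - \<alpha>) \<le> c1 / (2 * Ec)"
  proof -
    have "\<kappa> powr (\<theta> - \<alpha>) \<le> ((c1 / (2 * Ec)) powr (1 / (\<theta> - \<alpha>))) powr (\<theta> - \<alpha>)"
      using \<kappa> ta by (intro powr_mono2) (auto simp: \<kappa>_def)
    also have "\<dots> = c1 / (2 * Ec)" using ta c1 Ec_pos by (simp add: powr_powr)
    finally show ?thesis .
  qed
  define c where "c = c1 / 2 * \<kappa> powr \<alpha>"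
  have "c > 0" using c1 \<kappa> by (simp add: c_def)
  moreover have "norm (Zb t) \<ge> c * t powr (- (\<beta> + \<alpha> * (\<beta> + 1) / (\<theta> - \<alpha>)))" if t: "t \<ge> 2" for t
  proof -
    have tp: "t > 0" using t by simp
    obtain L where L: "((\<lambda>\<sigma>. Z (Complex \<sigma> t)) \<longlongrightarrow> L) (at_right 1)"
      and Lb: "\<And>\<sigma>. 1 < \<sigma> \<Longrightarrow> \<sigma> \<le> 2 \<Longrightarrow> norm (Z (Complex \<sigma> t) - L) \<le> Ec * t * (\<sigma> - 1) powr \<theta>"
      using boundary[OF t] by blast
    have ZbL: "Zb t = L" unfolding Zb_def using L by (intro tendsto_Lim) auto
    define \<delta> where "\<delta> = \<kappa> * t powr (- p)"
    have tp1: "t powr (- p) \<le> 1" using t p by (intro powr_le1') auto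
    have \<delta>: "0 < \<delta>" "\<delta> \<le> 1" using \<kappa> tp tp1 by (auto simp: \<delta>_def intro: mult_le_one)
    have y: "norm (Z (Complex (1 + \<delta>) t)) \<ge> c1 * \<delta> powr \<alpha> * t powr (- \<beta>)"
    proof -
      have "(Fc / \<delta>) powr (- \<alpha>) * (Fc * real n * t) powr (- \<beta>) = c1 * \<delta> powr \<alpha> * t powr (- \<beta>)"
        using Fc_pos \<delta> tp n by (simp add: c1_def powr_divide powr_mult powr_minus field_simps)
      thus ?thesis using y_lower[OF t n \<delta>] by (simp add: \<alpha>_def \<beta>_def)
    qed
    have diff: "norm (Z (Complex (1 + \<delta>) t) - L) \<le> Ec * t * \<delta> powr \<theta>"
      using Lb[of "1 + \<delta>"] \<delta> by simp
    have "Ec * t * \<delta> powr \<theta> = Ec * t * \<delta> powr (\<theta> - \<alpha>) * \<delta> powr \<alpha>"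
      by (simp add: mult.assoc powr_add[symmetric])
    also have "\<delta> powr (\<theta> - \<alpha>) = \<kappa> powr (\<theta> - \<alpha>) * t powr (- (\<beta> + 1))"
      using \<kappa> tp ta by (simp add: \<delta>_def powr_mult powr_powr p_def)
    also have "Ec * t * (\<kappa> powr (\<theta> - \<alpha>) * t powr (- (\<beta> + 1))) * \<delta> powr \<alpha>
        \<le> Ec * t * (c1 / (2 * Ec) * t powr (- (\<beta> + 1))) * \<delta> powr \<alpha>"
      using \<kappa>2 Ec_pos tp by (intro mult_right_mono mult_left_mono) auto
    also have "\<dots> = c1 / 2 * (t * t powr (- (\<beta> + 1))) * \<delta> powr \<alpha>"
      using Ec_pos by (simp add: field_simps)
    also have "t * t powr (- (\<beta> + 1)) = t powr (- \<beta>)"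
      using tp by (simp add: powr_add[symmetric] powr_minus field_simps)
    finally have E: "Ec * t * \<delta> powr \<theta> \<le> c1 / 2 * t powr (- \<beta>) * \<delta> powr \<alpha>" by simp
    have "norm L \<ge> norm (Z (Complex (1 + \<delta>) t)) - norm (Z (Complex (1 + \<delta>) t) - L)"
      using norm_triangle_ineq2[of "Z (Complex (1 + \<delta>) t)" L] by (simp add: norm_minus_commute)
    hence "norm L \<ge> c1 / 2 * \<delta> powr \<alpha> * t powr (- \<beta>)"
      using y diff E by (simp add: algebra_simps)
    also have "\<delta> powr \<alpha> = \<kappa> powr \<alpha> * t powr (- (p * \<alpha>))"
      using \<kappa> tp by (simp add: \<delta>_def powr_mult powr_powr)
    also have "c1 / 2 * (\<kappa> powr \<alpha> * t powr (- (p * \<alpha>))) * t powr (- \<beta>)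
        = c * t powr (- (\<beta> + \<alpha> * (\<beta> + 1) / (\<theta> - \<alpha>)))"
      by (simp add: c_def p_def powr_add[symmetric] algebra_simps)
    finally show ?thesis using ZbL by simp
  qed
  ultimately show ?thesis unfolding \<alpha>_def \<beta>_def by blast
qed

end


lemma exponent_bound:
  fixes \<epsilon> N :: real
  assumes e: "0 < \<epsilon>" "\<epsilon> \<le> 1/2" and N1: "2 / \<epsilon> \<le> N - 1" and N2: "N - 1 \<le> 2 / \<epsilon> + 1"
  shows "N / (2 * (N - 1)) < 1/2 + \<epsilon>/2"
    and "(N - 2) / 2 + (N / (2 * (N - 1))) * ((N - 2) / 2 + 1) / ((1/2 + \<epsilon>/2) - N / (2 * (N - 1))) \<le> 8 / \<epsilon>^2"
proof -
  define u where "u = 1 / \<epsilon>"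
  have u: "u \<ge> 2" using e by (simp add: u_def field_simps)
  have N1': "2 * u \<le> N - 1" "N - 1 \<le> 2 * u + 1" using N1 N2 by (simp_all add: u_def)
  have Np: "N - 1 > 0" using N1' u by linarith
  have "1 / (N - 1) \<le> 1 / (2 * u)" using N1' u by (intro divide_left_mono) auto
  also have "1 / (2 * u) = \<epsilon> / 2" using e by (simp add: u_def)
  finally have inv: "1 / (N - 1) \<le> \<epsilon> / 2" .
  have aeq: "N / (2 * (N - 1)) = 1/2 + 1 / (2 * (N - 1))" using Np by (simp add: field_simps)
  have h2: "1 / (2 * (N - 1)) = (1 / (N - 1)) / 2" by simp
  have a1: "N / (2 * (N - 1)) \<le> 1/2 + \<epsilon>/4" 
  proof -
    have gen: "\<And>q::real. q \<le> \<epsilon> / 2 \<Longrightarrow> 1/2 + q/2 \<le> 1/2 + \<epsilon>/4" by linarith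
    show ?thesis unfolding aeq h2 by (rule gen[OF inv])
  qed
  thus "N / (2 * (N - 1)) < 1/2 + \<epsilon>/2" using e by linarith
  define \<alpha> where "\<alpha> = N / (2 * (N - 1))"
  have \<alpha>: "\<alpha> \<le> 3/4" "\<alpha> \<ge> 0" using a1 e Np by (auto simp: \<alpha>_def)
  have ta: "(1/2 + \<epsilon>/2) - \<alpha> \<ge> \<epsilon> / 4" using a1 by (simp add: \<alpha>_def)
  have b1: "(N - 2) / 2 + 1 = N / 2" by (simp add: diff_divide_distrib)
  have Nn: "N / 2 \<ge> 0" using Np by simp
  have "\<alpha> * (N / 2) / ((1/2 + \<epsilon>/2) - \<alpha>) \<le> (3/4) * (N / 2) / ((1/2 + \<epsilon>/2) - \<alpha>)"
    using \<alpha> Nn ta e by (intro divide_right_mono mult_right_mono) auto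
  also have "\<dots> \<le> (3/4) * (N / 2) / (\<epsilon> / 4)"
    using ta e Nn by (intro divide_left_mono) auto
  also have "\<dots> = (3/2) * N * u" using e by (simp add: u_def field_simps)
  also have "\<dots> \<le> (3/2) * (2 * u + 2) * u" using N1' u by (intro mult_right_mono mult_left_mono) auto
  finally have t2: "\<alpha> * (N / 2) / ((1/2 + \<epsilon>/2) - \<alpha>) \<le> (3/2) * (2 * u + 2) * u" .
  have t1: "(N - 2) / 2 \<le> u" using N1' by simp
  have "(N - 2) / 2 + \<alpha> * ((N - 2) / 2 + 1) / ((1/2 + \<epsilon>/2) - \<alpha>) \<le> u + (3/2) * (2 * u + 2) * u"
    unfolding b1 by (rule add_mono[OF t1 t2])
  also have "\<dots> = 3 * u^2 + 4 * u" by (simp add: algebra_simps power2_eq_square)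
  also have "\<dots> \<le> 8 * u^2" using u by (simp add: power2_eq_square)
  also have "8 * u^2 = 8 / \<epsilon>^2" by (simp add: u_def power_divide)
  finally show "(N - 2) / 2 + (N / (2 * (N - 1))) * ((N - 2) / 2 + 1) / ((1/2 + \<epsilon>/2) - N / (2 * (N - 1))) \<le> 8 / \<epsilon>^2"
    by (simp add: \<alpha>_def)
qed

theorem mainTheorem10:
  fixes nrm :: "'a::comm_monoid_mult \<Rightarrow> real" and A \<gamma> :: real
  assumes "arith_semigroup nrm"
    and "3/2 < \<gamma>" and "\<gamma> \<le> 2"
    and "(\<lambda>x. count_N nrm x - A * x) \<in> O(\<lambda>x. x / (ln x) powr \<gamma>)"
  shows "\<exists>c>0. \<forall>t::real. t \<ge> 2 \<longrightarrow>
           cmod (zeta_G_boundary nrm t) \<ge> c * t powr (- 8 / (\<gamma> - 3/2)^2)"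
proof -
  interpret asg nrm using assms(1) by unfold_locales
  from assms(4) obtain C where C: "C > 0"
    and ev: "eventually (\<lambda>x. norm (count_N nrm x - A * x) \<le> C * norm (x / ln x powr \<gamma>)) at_top"
    by (elim landau_o.bigE)
  then obtain x1 where x1: "\<And>x. x \<ge> x1 \<Longrightarrow> norm (count_N nrm x - A * x) \<le> C * norm (x / ln x powr \<gamma>)"
    by (auto simp: eventually_at_top_linorder)
  define x0 where "x0 = max x1 (exp 1)"
  define \<theta> where "\<theta> = (\<gamma> - 1/2) / 2"
  interpret asgA nrm A by unfold_locales
  interpret asgB nrm A C x0 \<gamma> \<theta>
  proof unfold_locales
    show "x0 \<ge> exp 1" by (simp add: x0_def)
    show "C \<ge> 0" using C by simp
    show "0 < \<theta>" "\<theta> \<le> 1" "\<gamma> - \<theta> > 1" using assms(2,3) by (auto simp: \<theta>_def field_simps)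
    fix x assume x: "x \<ge> x0"
    hence xx1: "x \<ge> x1" by (simp add: x0_def)
    have "x \<ge> exp 1" using x by (simp add: x0_def)
    hence xp: "x > 0" using exp_gt_zero[of 1] by linarith
    have "norm (x / ln x powr \<gamma>) = x / ln x powr \<gamma>" using xp by simp
    moreover have "Rf x = count_N nrm x - A * x" by (simp add: Rf_def N_def)
    ultimately show "\<bar>Rf x\<bar> \<le> C * x / ln x powr \<gamma>" using x1[OF xx1] xp by simp
  qed
  define \<epsilon> where "\<epsilon> = \<gamma> - 3/2"
  have e: "0 < \<epsilon>" "\<epsilon> \<le> 1/2" using assms(2,3) by (auto simp: \<epsilon>_def)
  define n where "n = nat \<lceil>2 / \<epsilon>\<rceil> + 1"
  have "2 / \<epsilon> > 0" using e by simp
  hence ceil_nn: "\<lceil>2 / \<epsilon>\<rceil> \<ge> 0" by linarith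
  have Nm1: "real n - 1 = real_of_int \<lceil>2 / \<epsilon>\<rceil>" using ceil_nn by (simp add: n_def)
  have N1: "2 / \<epsilon> \<le> real n - 1" unfolding Nm1 by linarith
  have N2: "real n - 1 \<le> 2 / \<epsilon> + 1" unfolding Nm1 by linarith
  have "2 / \<epsilon> \<ge> 4" using e by (simp add: field_simps)
  hence n2: "n \<ge> 2" using N1 by linarith
  have th_eq: "\<theta> = 1/2 + \<epsilon>/2" by (simp add: \<theta>_def \<epsilon>_def field_simps)
  have \<alpha>: "real n / (2 * (real n - 1)) < \<theta>"
    using exponent_bound(1)[OF e N1 N2] by (simp add: th_eq)
  obtain c where c: "c > 0" and cb: "\<And>t. t \<ge> 2 \<Longrightarrow> norm (Zb t) \<ge> c * t powr (- ((real n - 2) / 2 +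
      (real n / (2 * (real n - 1))) * ((real n - 2) / 2 + 1) / (\<theta> - real n / (2 * (real n - 1)))))"
    using final_bound[OF n2 \<alpha>] by blast
  have eb: "(real n - 2) / 2 + (real n / (2 * (real n - 1))) * ((real n - 2) / 2 + 1) / (\<theta> - real n / (2 * (real n - 1)))
      \<le> 8 / (\<gamma> - 3/2)^2"
    using exponent_bound(2)[OF e N1 N2] by (simp add: th_eq \<epsilon>_def)
  show ?thesis
  proof (intro exI[of _ c] conjI allI impI c)
    fix t :: real assume t: "t \<ge> 2"
    have Zb_eq: "zeta_G_boundary nrm t = Zb t"
      by (simp add: zeta_G_boundary_def Zb_def zeta_Z)
    have "t powr (- 8 / (\<gamma> - 3/2)^2) \<le> t powr (- ((real n - 2) / 2 +
      (real n / (2 * (real n - 1))) * ((real n - 2) / 2 + 1) / (\<theta> - real n / (2 * (real n - 1)))))"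
      using eb t by (intro powr_mono) auto
    hence "c * t powr (- 8 / (\<gamma> - 3/2)^2) \<le> c * t powr (- ((real n - 2) / 2 +
      (real n / (2 * (real n - 1))) * ((real n - 2) / 2 + 1) / (\<theta> - real n / (2 * (real n - 1)))))"
      using c by (intro mult_left_mono) auto
    also have "\<dots> \<le> norm (Zb t)" by (rule cb[OF t])
    finally show "cmod (zeta_G_boundary nrm t) \<ge> c * t powr (- 8 / (\<gamma> - 3/2)^2)" by (simp add: Zb_eq)
  qed
qed


end
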